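(* Let $(H_m)$ be a $p$-family of complete graphs, let $(G_m)$ be a $p$-family of graphs, and let $f_m=\hat f_{G_m,H_m}(\bar Z,\bar Y)$ be the generalised homomorphism polynomial (over all homomorphisms from $G_m$ to $H_m$). (i) If $(G_m)$ has bounded tree-width, then $(f_m)\in\mathsf{VP}$. (ii) If $(G_m)$ has bounded path-width, then $(f_m)\in\mathsf{VBP}$.
   Context: For undirected graphs $G,H$, a homomorphism $G\to H$ is a map $V(G)\to V(H)$ sending edges to edges. With variables $Z_{u,a}$ ($u\in V(G)$, $a\in V(H)$) and $Y_{(a,b)}$ ($(a,b)\in E(H)$), the generalised homomorphism polynomial is $\hat f_{G,H}=\sum_{\phi}\big(\prod_{u\in V(G)}Z_{u,\phi(u)}\big)\big(\prod_{(u,v)\in E(G)}Y_{(\phi(u),\phi(v))}\big)$, the sum over all homomorphisms $\phi:G\to H$. A sequence of graphs is a $p$-family if the number of vertices of $G_m$ is polynomially bounded in $m$; it has bounded tree-width (path-width) if some constant bounds the tree-width (path-width) of every graph in it. A $p$-family of polynomials has polynomially bounded number of variables and degree. $\mathsf{VP}$: $p$-families computed by polynomial-size arithmetic circuits; $\mathsf{VBP}$: $p$-families computed by polynomial-size skew arithmetic circuits (at every $\times$ gate at most one input is the output of another gate). *)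

theory Defs
  imports Main "HOL-Library.Poly_Mapping"
begin

definition wf_graph :: "nat \<Rightarrow> nat set set \<Rightarrow> bool" where
  "wf_graph n E \<longleftrightarrow> (\<forall>e\<in>E. \<exists>u v. u \<noteq> v \<and> u < n \<and> v < n \<and> e = {u, v})"

definition complete_edges :: "nat \<Rightarrow> nat set set" where
  "complete_edges n = {{a, b} | a b. a \<noteq> b \<and> a < n \<and> b < n}"

definition homs :: "nat \<Rightarrow> nat set set \<Rightarrow> nat \<Rightarrow> nat set set \<Rightarrow> (nat \<Rightarrow> nat) set" where
  "homs nG EG nH EH = {\<phi>. (\<forall>u<nG. \<phi> u < nH) \<and> (\<forall>u. nG \<le> u \<longrightarrow> \<phi> u = 0)
                          \<and> (\<forall>e\<in>EG. \<phi> ` e \<in> EH)}"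

definition adj :: "nat set set \<Rightarrow> nat \<Rightarrow> nat \<Rightarrow> bool" where
  "adj E x y \<longleftrightarrow> {x, y} \<in> E \<and> x \<noteq> y"

definition connected_in :: "nat set set \<Rightarrow> nat set \<Rightarrow> bool" where
  "connected_in E S \<longleftrightarrow>
     (\<forall>x\<in>S. \<forall>y\<in>S. (x, y) \<in> {(a, b). a \<in> S \<and> b \<in> S \<and> adj E a b}\<^sup>*)"

definition has_cycle :: "nat set set \<Rightarrow> bool" where
  "has_cycle E \<longleftrightarrow> (\<exists>cs. length cs \<ge> 3 \<and> distinct cs
       \<and> (\<forall>i. Suc i < length cs \<longrightarrow> adj E (cs ! i) (cs ! Suc i))
       \<and> adj E (last cs) (hd cs))"

definition is_tree :: "nat \<Rightarrow> nat set set \<Rightarrow> bool" where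
  "is_tree k TE \<longleftrightarrow> 0 < k \<and> wf_graph k TE \<and> connected_in TE {0..<k} \<and> \<not> has_cycle TE"

definition tree_decomposition ::
  "nat \<Rightarrow> nat set set \<Rightarrow> nat \<Rightarrow> nat set set \<Rightarrow> (nat \<Rightarrow> nat set) \<Rightarrow> bool" where
  "tree_decomposition n E k TE B \<longleftrightarrow>
     is_tree k TE
     \<and> (\<forall>t<k. B t \<subseteq> {0..<n})
     \<and> (\<forall>v<n. \<exists>t<k. v \<in> B t)
     \<and> (\<forall>e\<in>E. \<exists>t<k. e \<subseteq> B t)
     \<and> (\<forall>v<n. connected_in TE {t. t < k \<and> v \<in> B t})"

definition treewidth_le :: "nat \<Rightarrow> nat set set \<Rightarrow> nat \<Rightarrow> bool" where
  "treewidth_le n E w \<longleftrightarrow>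
     (\<exists>k TE B. tree_decomposition n E k TE B \<and> (\<forall>t<k. card (B t) \<le> w + 1))"

definition path_decomposition :: "nat \<Rightarrow> nat set set \<Rightarrow> nat \<Rightarrow> (nat \<Rightarrow> nat set) \<Rightarrow> bool" where
  "path_decomposition n E k B \<longleftrightarrow>
     0 < k
     \<and> (\<forall>t<k. B t \<subseteq> {0..<n})
     \<and> (\<forall>v<n. \<exists>t<k. v \<in> B t)
     \<and> (\<forall>e\<in>E. \<exists>t<k. e \<subseteq> B t)
     \<and> (\<forall>v i j l. i \<le> l \<and> l \<le> j \<and> j < k \<and> v \<in> B i \<and> v \<in> B j \<longrightarrow> v \<in> B l)"

definition pathwidth_le :: "nat \<Rightarrow> nat set set \<Rightarrow> nat \<Rightarrow> bool" where
  "pathwidth_le n E w \<longleftrightarrow>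
     (\<exists>k B. path_decomposition n E k B \<and> (\<forall>t<k. card (B t) \<le> w + 1))"

type_synonym ('v, 'a) mpoly = "('v \<Rightarrow>\<^sub>0 nat) \<Rightarrow>\<^sub>0 'a"

definition mvar :: "'v \<Rightarrow> ('v, 'a::{zero,one}) mpoly" where
  "mvar x = Poly_Mapping.single (Poly_Mapping.single x 1) 1"

definition mconst :: "'a::zero \<Rightarrow> ('v, 'a) mpoly" where
  "mconst c = Poly_Mapping.single 0 c"

definition mpoly_vars :: "('v, 'a::zero) mpoly \<Rightarrow> 'v set" where
  "mpoly_vars p = \<Union> (Poly_Mapping.keys ` Poly_Mapping.keys p)"

definition mono_deg :: "('v \<Rightarrow>\<^sub>0 nat) \<Rightarrow> nat" where
  "mono_deg \<mu> = sum (Poly_Mapping.lookup \<mu>) (Poly_Mapping.keys \<mu>)"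

definition mpoly_deg :: "('v, 'a::zero) mpoly \<Rightarrow> nat" where
  "mpoly_deg p = Max (insert 0 (mono_deg ` Poly_Mapping.keys p))"

text \<open>Variables Z_{u,a} and Y_e, where an edge e of the undirected graph H is an unordered pair.\<close>
datatype hvar = Zv nat nat | Yv "nat set"

definition hom_poly :: "nat \<Rightarrow> nat set set \<Rightarrow> nat \<Rightarrow> nat set set \<Rightarrow> (hvar, 'a::comm_ring_1) mpoly" where
  "hom_poly nG EG nH EH =
     (\<Sum>\<phi>\<in>homs nG EG nH EH.
        (\<Prod>u\<in>{0..<nG}. mvar (Zv u (\<phi> u))) * (\<Prod>e\<in>EG. mvar (Yv (\<phi> ` e))))"

text \<open>A circuit is a list of gates; gate i may only refer to gates j < i; the output is the last gate.\<close>
datatype ('v, 'a) gate = Input 'v | Cst 'a | Plus nat nat | Times nat nat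

fun gate_ok :: "nat \<Rightarrow> ('v, 'a) gate \<Rightarrow> bool" where
  "gate_ok i (Plus j l) = (j < i \<and> l < i)"
| "gate_ok i (Times j l) = (j < i \<and> l < i)"
| "gate_ok i _ = True"

definition wf_circuit :: "('v, 'a) gate list \<Rightarrow> bool" where
  "wf_circuit gs \<longleftrightarrow> gs \<noteq> [] \<and> (\<forall>i<length gs. gate_ok i (gs ! i))"

fun is_leaf :: "('v, 'a) gate \<Rightarrow> bool" where
  "is_leaf (Input _) = True"
| "is_leaf (Cst _) = True"
| "is_leaf _ = False"

definition skew_circuit :: "('v, 'a) gate list \<Rightarrow> bool" where
  "skew_circuit gs \<longleftrightarrow>
     (\<forall>i<length gs. \<forall>j l. gs ! i = Times j l \<longrightarrow> is_leaf (gs ! j) \<or> is_leaf (gs ! l))"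

fun gate_val :: "('v, 'a::comm_ring_1) mpoly list \<Rightarrow> ('v, 'a) gate \<Rightarrow> ('v, 'a) mpoly" where
  "gate_val vs (Input x) = mvar x"
| "gate_val vs (Cst c) = mconst c"
| "gate_val vs (Plus j l) = vs ! j + vs ! l"
| "gate_val vs (Times j l) = vs ! j * vs ! l"

definition circuit_vals :: "('v, 'a::comm_ring_1) gate list \<Rightarrow> ('v, 'a) mpoly list" where
  "circuit_vals gs = foldl (\<lambda>vs g. vs @ [gate_val vs g]) [] gs"

definition computes :: "('v, 'a::comm_ring_1) gate list \<Rightarrow> ('v, 'a) mpoly \<Rightarrow> bool" where
  "computes gs p \<longleftrightarrow> wf_circuit gs \<and> last (circuit_vals gs) = p"

definition poly_bounded :: "(nat \<Rightarrow> nat) \<Rightarrow> bool" where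
  "poly_bounded s \<longleftrightarrow> (\<exists>c. \<forall>m. s m \<le> c * (Suc m) ^ c)"

definition p_family :: "(nat \<Rightarrow> ('v, 'a::zero) mpoly) \<Rightarrow> bool" where
  "p_family f \<longleftrightarrow> (\<forall>m. finite (mpoly_vars (f m)))
      \<and> poly_bounded (\<lambda>m. card (mpoly_vars (f m))) \<and> poly_bounded (\<lambda>m. mpoly_deg (f m))"

definition in_VP :: "(nat \<Rightarrow> ('v, 'a::comm_ring_1) mpoly) \<Rightarrow> bool" where
  "in_VP f \<longleftrightarrow> p_family f \<and>
     (\<exists>s. poly_bounded s \<and> (\<forall>m. \<exists>gs. computes gs (f m) \<and> length gs \<le> s m))"

definition in_VBP :: "(nat \<Rightarrow> ('v, 'a::comm_ring_1) mpoly) \<Rightarrow> bool" where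
  "in_VBP f \<longleftrightarrow> p_family f \<and>
     (\<exists>s. poly_bounded s \<and> (\<forall>m. \<exists>gs. computes gs (f m) \<and> skew_circuit gs \<and> length gs \<le> s m))"

end

theory Submission
  imports Defs
begin


lemma circuit_vals_snoc:
  "circuit_vals (gs @ [g]) = circuit_vals gs @ [gate_val (circuit_vals gs) g]"
  by (simp add: circuit_vals_def)

lemma length_circuit_vals[simp]: "length (circuit_vals gs) = length gs"
  by (induction gs rule: rev_induct) (auto simp: circuit_vals_snoc circuit_vals_def)

lemma circuit_vals_append_nth:
  "i < length gs \<Longrightarrow> circuit_vals (gs @ ds) ! i = circuit_vals gs ! i"
proof (induction ds rule: rev_induct)
  case Nil then show ?case by simp
next
  case (snoc d ds)
  then show ?case
    using circuit_vals_snoc[of "gs @ ds" d]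
    by (simp add: nth_append)
qed

definition ext :: "('v,'a) gate list \<Rightarrow> ('v,'a) gate list \<Rightarrow> bool" where
  "ext gs gs' \<longleftrightarrow> (\<exists>ds. gs' = gs @ ds)"

definition okc :: "bool \<Rightarrow> ('v,'a) gate list \<Rightarrow> bool" where
  "okc b gs \<longleftrightarrow> (\<forall>i<length gs. gate_ok i (gs ! i)) \<and> (b \<longrightarrow> skew_circuit gs)"

definition has :: "('v,'a::comm_ring_1) gate list \<Rightarrow> ('v,'a) mpoly \<Rightarrow> bool" where
  "has gs p \<longleftrightarrow> (\<exists>i<length gs. circuit_vals gs ! i = p)"

lemma ext_refl[simp]: "ext gs gs" by (auto simp: ext_def)
lemma ext_trans: "ext a b \<Longrightarrow> ext b c \<Longrightarrow> ext a c" by (auto simp: ext_def)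
lemma ext_len: "ext a b \<Longrightarrow> length a \<le> length b" by (auto simp: ext_def)

lemma has_ext: "has gs p \<Longrightarrow> ext gs gs' \<Longrightarrow> has gs' p"
  unfolding has_def ext_def
  by (metis circuit_vals_append_nth length_append trans_less_add1)

lemma okc_Nil[simp]: "okc b []" by (simp add: okc_def skew_circuit_def)

lemma add_gate:
  assumes "okc b gs" "gate_ok (length gs) g"
    "b \<Longrightarrow> (\<forall>j l. g = Times j l \<longrightarrow> is_leaf (gs ! j) \<or> is_leaf (gs ! l))"
  shows "okc b (gs @ [g]) \<and> ext gs (gs @ [g]) \<and>
         circuit_vals (gs @ [g]) ! length gs = gate_val (circuit_vals gs) g"
proof -
  have g1: "\<forall>i<length (gs@[g]). gate_ok i ((gs@[g]) ! i)"
    using assms(1,2) by (auto simp: okc_def nth_append less_Suc_eq)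
  have "b \<longrightarrow> skew_circuit (gs @ [g])"
  proof
    assume b: b
    show "skew_circuit (gs @ [g])"
      unfolding skew_circuit_def
    proof (intro allI impI)
      fix i j l assume i: "i < length (gs @ [g])" and t: "(gs @ [g]) ! i = Times j l"
      show "is_leaf ((gs @ [g]) ! j) \<or> is_leaf ((gs @ [g]) ! l)"
      proof (cases "i < length gs")
        case True
        then have "gs ! i = Times j l" using t by (simp add: nth_append)
        moreover have "gate_ok i (gs ! i)" using assms(1) True by (auto simp: okc_def)
        ultimately have "j < length gs" "l < length gs" "is_leaf (gs ! j) \<or> is_leaf (gs ! l)"
          using True assms(1) b by (auto simp: okc_def skew_circuit_def)
        then show ?thesis by (simp add: nth_append)
      next
        case False
        then have "g = Times j l" using t i by (simp add: nth_append)
        moreover then have "j < length gs" "l < length gs" using assms(2) by auto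
        ultimately show ?thesis using assms(3) b by (auto simp: nth_append)
      qed
    qed
  qed
  then show ?thesis using g1 by (simp add: okc_def ext_def circuit_vals_snoc nth_append)
qed

definition builds :: "bool \<Rightarrow> ('v,'a::comm_ring_1) gate list \<Rightarrow> nat \<Rightarrow> (('v,'a) gate list \<Rightarrow> bool) \<Rightarrow> bool" where
  "builds b gs C Q \<longleftrightarrow> (\<exists>gs'. ext gs gs' \<and> okc b gs' \<and> length gs' \<le> length gs + C \<and> Q gs')"

lemma builds_mono_cost: "builds b gs C Q \<Longrightarrow> C \<le> C' \<Longrightarrow> builds b gs C' Q"
  unfolding builds_def by force

lemma add_leaf:
  assumes "okc b gs" "is_leaf g"
  shows "okc b (gs @ [g]) \<and> ext gs (gs @ [g]) \<and> has (gs @ [g]) (gate_val [] g)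
         \<and> (gs @ [g]) ! length gs = g"
proof -
  have "gate_ok (length gs) g" using assms(2) by (cases g) auto
  moreover have "\<And>j l. g \<noteq> Times j l" using assms(2) by (cases g) auto
  ultimately have "okc b (gs @ [g]) \<and> ext gs (gs @ [g]) \<and>
         circuit_vals (gs @ [g]) ! length gs = gate_val (circuit_vals gs) g"
    using add_gate[OF assms(1)] by blast
  moreover have "gate_val (circuit_vals gs) g = gate_val [] g" using assms(2) by (cases g) auto
  ultimately show ?thesis by (auto simp: has_def nth_append)
qed

lemma mconst_0[simp]: "mconst 0 = 0" by (simp add: mconst_def)
lemma mconst_1[simp]: "mconst 1 = 1" by (simp add: mconst_def)

lemma build_plus':
  assumes "okc b gs" "has gs p" "has gs q"
  shows "builds b gs 1 (\<lambda>gs'. has gs' (p + q))"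
proof -
  obtain i j where "i < length gs" "j < length gs" "circuit_vals gs ! i = p" "circuit_vals gs ! j = q"
    using assms by (auto simp: has_def)
  from add_gate[OF assms(1), of "Plus i j"] this show ?thesis unfolding builds_def
    by (intro exI[of _ "gs @ [Plus i j]"]) (auto simp: has_def)
qed

lemma build_times:
  assumes "okc False gs" "has gs p" "has gs q"
  shows "builds False gs 1 (\<lambda>gs'. has gs' (p * q))"
proof -
  obtain i j where ij: "i < length gs" "j < length gs" "circuit_vals gs ! i = p" "circuit_vals gs ! j = q"
    using assms by (auto simp: has_def)
  from add_gate[OF assms(1), of "Times i j"] ij show ?thesis unfolding builds_def
    by (intro exI[of _ "gs @ [Times i j]"]) (auto simp: has_def)
qed

definition leafv :: "('v,'a::comm_ring_1) mpoly \<Rightarrow> bool" where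
  "leafv p \<longleftrightarrow> (\<exists>x. p = mvar x) \<or> (\<exists>c. p = mconst c)"

lemma build_leaf:
  assumes "okc b gs" "leafv p"
  shows "builds b gs 1 (\<lambda>gs'. has gs' p)"
proof -
  obtain g where g: "is_leaf g" "gate_val [] g = p"
    using assms(2) unfolding leafv_def
    by (metis gate_val.simps(1) gate_val.simps(2) is_leaf.simps(1) is_leaf.simps(2))
  from add_leaf[OF assms(1) g(1)] g(2) show ?thesis unfolding builds_def
    by (intro exI[of _ "gs @ [g]"]) auto
qed

lemma build_times_leaf:
  assumes "okc b gs" "has gs p" "leafv q"
  shows "builds b gs 2 (\<lambda>gs'. has gs' (p * q))"
proof -
  obtain g where g: "is_leaf g" "gate_val [] g = q"
    using assms(3) unfolding leafv_def
    by (metis gate_val.simps(1) gate_val.simps(2) is_leaf.simps(1) is_leaf.simps(2))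
  obtain i where i: "i < length gs" "circuit_vals gs ! i = p" using assms(2) by (auto simp: has_def)
  let ?gs1 = "gs @ [g]"
  have 1: "okc b ?gs1" "ext gs ?gs1" "?gs1 ! length gs = g"
    "circuit_vals ?gs1 ! length gs = q"
    using add_leaf[OF assms(1) g(1)] g(2) apply auto
    using add_gate[OF assms(1), of g] g by (cases g; auto)
  have ci: "circuit_vals ?gs1 ! i = p" using i circuit_vals_append_nth[of i gs "[g]"] by simp
  have "okc b (?gs1 @ [Times i (length gs)]) \<and> ext ?gs1 (?gs1 @ [Times i (length gs)]) \<and>
         circuit_vals (?gs1 @ [Times i (length gs)]) ! length ?gs1 = gate_val (circuit_vals ?gs1) (Times i (length gs))"
    using add_gate[OF 1(1), of "Times i (length gs)"] i 1(3) g(1) by auto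
  then show ?thesis unfolding builds_def using 1 ci
    by (intro exI[of _ "?gs1 @ [Times i (length gs)]"]) (auto simp: has_def ext_def)
qed

lemma builds_seq:
  assumes "builds b gs C1 Q1" "\<And>gs1. ext gs gs1 \<Longrightarrow> okc b gs1 \<Longrightarrow> Q1 gs1 \<Longrightarrow> builds b gs1 C2 Q2"
  shows "builds b gs (C1 + C2) Q2"
proof -
  obtain gs1 where 1: "ext gs gs1" "okc b gs1" "length gs1 \<le> length gs + C1" "Q1 gs1"
    using assms(1) by (auto simp: builds_def)
  from assms(2)[OF 1(1,2,4)] obtain gs2 where "ext gs1 gs2" "okc b gs2" "length gs2 \<le> length gs1 + C2" "Q2 gs2"
    by (auto simp: builds_def)
  then show ?thesis using 1 unfolding builds_def by (intro exI[of _ gs2]) (auto intro: ext_trans)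
qed

lemma builds_triv: "okc b gs \<Longrightarrow> Q gs \<Longrightarrow> builds b gs 0 Q"
  by (auto simp: builds_def intro!: exI[of _ gs])

lemma builds_mono: "builds b gs C Q \<Longrightarrow> (\<And>gs'. ext gs gs' \<Longrightarrow> Q gs' \<Longrightarrow> Q' gs') \<Longrightarrow> builds b gs C Q'"
  by (auto simp: builds_def)

lemma builds_iter:
  assumes "finite X" "okc b gs" "P gs"
    and mP: "\<And>gs gs'. P gs \<Longrightarrow> ext gs gs' \<Longrightarrow> P gs'"
    and mQ: "\<And>x gs gs'. Q x gs \<Longrightarrow> ext gs gs' \<Longrightarrow> Q x gs'"
    and step: "\<And>x gs. x \<in> X \<Longrightarrow> okc b gs \<Longrightarrow> P gs \<Longrightarrow> builds b gs C (Q x)"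
  shows "builds b gs (C * card X) (\<lambda>gs'. P gs' \<and> (\<forall>x\<in>X. Q x gs'))"
  using assms(1,2,3) step
proof (induction X arbitrary: gs rule: finite_induct)
  case empty then show ?case by (auto intro: builds_triv)
next
  case (insert x F)
  have "builds b gs (C * card F + C) (\<lambda>gs'. P gs' \<and> (\<forall>y\<in>insert x F. Q y gs'))"
  proof (rule builds_seq)
    show "builds b gs (C * card F) (\<lambda>gs'. P gs' \<and> (\<forall>x\<in>F. Q x gs'))"
      using insert by auto
  next
    fix gs1 assume 1: "ext gs gs1" "okc b gs1" "P gs1 \<and> (\<forall>x\<in>F. Q x gs1)"
    have "builds b gs1 C (Q x)" using insert.prems(3)[of x gs1] 1 by auto
    then show "builds b gs1 C (\<lambda>gs'. P gs' \<and> (\<forall>y\<in>insert x F. Q y gs'))"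
      using 1 mP mQ unfolding builds_def by blast
  qed
  then show ?case using insert by (simp add: algebra_simps)
qed

lemma build_sum_list:
  assumes "okc b gs" "\<forall>x\<in>set xs. has gs (f x)"
  shows "builds b gs (length xs + 1) (\<lambda>gs'. has gs' (sum_list (map f xs)))"
  using assms
proof (induction xs arbitrary: gs)
  case Nil
  show ?case using build_leaf[OF Nil(1), of 0] by (simp add: leafv_def) (metis mconst_0)
next
  case (Cons x xs)
  have "builds b gs ((length xs + 1) + 1) (\<lambda>gs'. has gs' (f x + sum_list (map f xs)))"
  proof (rule builds_seq)
    show "builds b gs (length xs + 1) (\<lambda>gs'. has gs' (sum_list (map f xs)) \<and> has gs' (f x))"
      using Cons.IH[OF Cons.prems(1)] Cons.prems(2)
      by (auto elim!: builds_mono intro: has_ext)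
  next
    fix gs1 assume "ext gs gs1" "okc b gs1" "has gs1 (sum_list (map f xs)) \<and> has gs1 (f x)"
    then show "builds b gs1 1 (\<lambda>gs'. has gs' (f x + sum_list (map f xs)))"
      using build_plus' by blast
  qed
  then show ?case by simp
qed

lemma build_prod_list:
  assumes "okc False gs" "\<forall>x\<in>set xs. has gs (f x)"
  shows "builds False gs (length xs + 1) (\<lambda>gs'. has gs' (prod_list (map f xs)))"
  using assms
proof (induction xs arbitrary: gs)
  case Nil
  show ?case using build_leaf[OF Nil(1), of 1] by (simp add: leafv_def) (metis mconst_1)
next
  case (Cons x xs)
  have "builds False gs ((length xs + 1) + 1) (\<lambda>gs'. has gs' (f x * prod_list (map f xs)))"
  proof (rule builds_seq)
    show "builds False gs (length xs + 1) (\<lambda>gs'. has gs' (prod_list (map f xs)) \<and> has gs' (f x))"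
      using Cons.IH[OF Cons.prems(1)] Cons.prems(2)
      by (auto elim!: builds_mono intro: has_ext)
  next
    fix gs1 assume "ext gs gs1" "okc False gs1" "has gs1 (prod_list (map f xs)) \<and> has gs1 (f x)"
    then show "builds False gs1 1 (\<lambda>gs'. has gs' (f x * prod_list (map f xs)))"
      using build_times by blast
  qed
  then show ?case by simp
qed

lemma build_prod_leaves:
  assumes "okc b gs" "has gs p" "\<forall>x\<in>set xs. leafv (f x)"
  shows "builds b gs (2 * length xs) (\<lambda>gs'. has gs' (p * prod_list (map f xs)))"
  using assms
proof (induction xs arbitrary: gs p)
  case Nil
  then show ?case by (auto intro: builds_triv)
next
  case (Cons x xs)
  have "builds b gs (2 + 2 * length xs) (\<lambda>gs'. has gs' ((p * f x) * prod_list (map f xs)))"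
  proof (rule builds_seq)
    show "builds b gs 2 (\<lambda>gs'. has gs' (p * f x))"
      using build_times_leaf Cons.prems by auto
  next
    fix gs1 assume "ext gs gs1" "okc b gs1" "has gs1 (p * f x)"
    then show "builds b gs1 (2 * length xs) (\<lambda>gs'. has gs' (p * f x * prod_list (map f xs)))"
      using Cons.IH Cons.prems(3) by auto
  qed
  then show ?case by (simp add: mult.assoc)
qed

lemma finish:
  assumes "okc b gs" "has gs p"
  shows "\<exists>gs'. computes gs' p \<and> (b \<longrightarrow> skew_circuit gs') \<and> length gs' \<le> length gs + 2"
proof -
  obtain i where i: "i < length gs" "circuit_vals gs ! i = p" using assms(2) by (auto simp: has_def)
  let ?g1 = "gs @ [Cst 0]"
  have 1: "okc b ?g1" "circuit_vals ?g1 ! length gs = 0" "circuit_vals ?g1 ! i = p"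
    using add_gate[OF assms(1), of "Cst 0"] i circuit_vals_append_nth[of i gs "[Cst 0]"] by auto
  let ?g2 = "?g1 @ [Plus i (length gs)]"
  have 2: "okc b ?g2" "circuit_vals ?g2 ! length ?g1 = p"
    using add_gate[OF 1(1), of "Plus i (length gs)"] i 1 by auto
  have L: "length (circuit_vals ?g2) = Suc (length ?g1)" by simp
  have "last (circuit_vals ?g2) = circuit_vals ?g2 ! length ?g1"
    by (metis L diff_Suc_1 last_conv_nth length_greater_0_conv zero_less_Suc)
  then have "computes ?g2 p" using 2 unfolding computes_def wf_circuit_def okc_def by auto
  then show ?thesis using 2 by (intro exI[of _ ?g2]) (auto simp: okc_def)
qed


definition treeT :: "nat set \<Rightarrow> nat set set \<Rightarrow> bool" where
  "treeT T TE \<longleftrightarrow> finite T \<and> T \<noteq> {} \<and> (\<forall>e\<in>TE. \<exists>a b. a \<noteq> b \<and> a \<in> T \<and> b \<in> T \<and> e = {a, b})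
     \<and> connected_in TE T \<and> \<not> has_cycle TE"

definition decT :: "nat set \<Rightarrow> nat set set \<Rightarrow> nat set \<Rightarrow> (nat \<Rightarrow> nat set) \<Rightarrow> nat set set \<Rightarrow> bool" where
  "decT T TE V B Sc \<longleftrightarrow> treeT T TE \<and> (\<forall>t\<in>T. B t \<subseteq> V) \<and> (\<forall>v\<in>V. \<exists>t\<in>T. v \<in> B t)
     \<and> (\<forall>S\<in>Sc. \<exists>t\<in>T. S \<subseteq> B t) \<and> (\<forall>v\<in>V. connected_in TE {t\<in>T. v \<in> B t})"

lemma adj_sym: "adj E x y = adj E y x"
  by (auto simp: adj_def insert_commute)

lemma conn_remove:
  assumes c: "connected_in TE S" and l: "\<forall>y. adj TE l y \<longrightarrow> y = l'" and ll: "l \<in> S \<longrightarrow> l' \<in> S"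
  shows "connected_in {e\<in>TE. l \<notin> e} (S - {l})"
  unfolding connected_in_def
proof (intro ballI)
  fix x y assume x: "x \<in> S - {l}" and y: "y \<in> S - {l}"
  let ?R = "{(a, b). a \<in> S \<and> b \<in> S \<and> adj TE a b}"
  let ?R' = "{(a, b). a \<in> S - {l} \<and> b \<in> S - {l} \<and> adj {e\<in>TE. l \<notin> e} a b}"
  have adj': "\<And>a b. a \<noteq> l \<Longrightarrow> b \<noteq> l \<Longrightarrow> adj TE a b \<Longrightarrow> adj {e\<in>TE. l \<notin> e} a b"
    by (auto simp: adj_def)
  have xy: "(x, y) \<in> ?R\<^sup>*" using c x y by (auto simp: connected_in_def)
  have "\<And>z. (x, z) \<in> ?R\<^sup>* \<Longrightarrow> (z \<noteq> l \<longrightarrow> (x, z) \<in> ?R'\<^sup>*) \<and> (z = l \<longrightarrow> (x, l') \<in> ?R'\<^sup>*)"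
  proof -
    fix z assume "(x, z) \<in> ?R\<^sup>*"
    then show "(z \<noteq> l \<longrightarrow> (x, z) \<in> ?R'\<^sup>*) \<and> (z = l \<longrightarrow> (x, l') \<in> ?R'\<^sup>*)"
    proof (induction rule: rtrancl_induct)
      case base then show ?case using x by auto
    next
      case (step z z')
      then have zz: "z \<in> S" "z' \<in> S" "adj TE z z'" by auto
      have "z \<noteq> z'" using zz(3) by (auto simp: adj_def)
      show ?case
      proof (cases "z = l")
        case True
        then have "z' = l'" using l zz(3) by auto
        then show ?thesis using step.IH True \<open>z \<noteq> z'\<close> by auto
      next
        case False
        show ?thesis
        proof (cases "z' = l")
          case True
          then have "z = l'" using l zz(3) adj_sym by metis
          then show ?thesis using step.IH False True by auto
        next
          case False2: False
          have "(z, z') \<in> ?R'" using zz False False2 adj' by auto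
          then show ?thesis using step.IH False False2
            by (meson rtrancl.rtrancl_into_rtrancl)
        qed
      qed
    qed
  qed
  then show "(x, y) \<in> ?R'\<^sup>*" using xy y by auto
qed

lemma has_cycle_mono:
  assumes "has_cycle E'" "E' \<subseteq> E" shows "has_cycle E"
  using assms unfolding has_cycle_def adj_def by blast

lemma treeT_remove:
  assumes t: "treeT T TE" and lT: "l \<in> T" "l' \<in> T" "l \<noteq> l'" and l: "\<forall>y. adj TE l y \<longrightarrow> y = l'"
  shows "treeT (T - {l}) {e\<in>TE. l \<notin> e}"
proof -
  have "connected_in {e\<in>TE. l \<notin> e} (T - {l})"
    using conn_remove[of TE T l l'] t lT l by (auto simp: treeT_def)
  moreover have "\<not> has_cycle {e\<in>TE. l \<notin> e}"
    using t has_cycle_mono[of "{e\<in>TE. l \<notin> e}" TE] by (auto simp: treeT_def)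
  moreover have "T - {l} \<noteq> {}" using lT by auto
  ultimately show ?thesis using t unfolding treeT_def by fastforce
qed

definition is_path :: "nat set \<Rightarrow> nat set set \<Rightarrow> nat list \<Rightarrow> bool" where
  "is_path T TE cs \<longleftrightarrow> distinct cs \<and> set cs \<subseteq> T \<and> 2 \<le> length cs
      \<and> (\<forall>i. Suc i < length cs \<longrightarrow> adj TE (cs ! i) (cs ! Suc i))"

lemma tree_leaf:
  assumes t: "treeT T TE" and c: "2 \<le> card T"
  shows "\<exists>l\<in>T. \<exists>l'\<in>T. l \<noteq> l' \<and> (\<forall>y. adj TE l y \<longrightarrow> y = l')"
proof -
  have fin: "finite T" using t by (auto simp: treeT_def)
  obtain x where x: "x \<in> T" using t by (auto simp: treeT_def)
  have "card (T - {x}) \<ge> 1" using c x fin by (simp add: card_Diff_singleton)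
  then obtain y where "y \<in> T - {x}" by (metis card.empty ex_in_conv not_one_le_zero)
  then have xy: "x \<in> T" "y \<in> T" "x \<noteq> y" using x by auto
  let ?R = "{(a, b). a \<in> T \<and> b \<in> T \<and> adj TE a b}"
  have "(x, y) \<in> ?R\<^sup>*" using t xy by (auto simp: treeT_def connected_in_def)
  then obtain z where "(x, z) \<in> ?R" using xy(3) by (metis converse_rtranclE)
  then have p0: "is_path T TE [x, z]"
    by (auto simp: is_path_def adj_def less_Suc_eq)
  have bound: "\<forall>cs. is_path T TE cs \<longrightarrow> length cs < Suc (card T)"
  proof (intro allI impI)
    fix cs assume "is_path T TE cs"
    then have "distinct cs" "set cs \<subseteq> T" by (auto simp: is_path_def)
    then have "length cs \<le> card T" by (metis distinct_card card_mono fin)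
    then show "length cs < Suc (card T)" by simp
  qed
  obtain cs where cs: "is_path T TE cs" and mx: "\<forall>ds. is_path T TE ds \<longrightarrow> length ds \<le> length cs"
    using Lattices_Big.ex_has_greatest_nat[OF p0 bound] by blast
  have csp: "distinct cs" "set cs \<subseteq> T" "2 \<le> length cs" "\<And>i. Suc i < length cs \<Longrightarrow> adj TE (cs ! i) (cs ! Suc i)"
    using cs by (auto simp: is_path_def)
    have "0 < length cs" "1 < length cs" using csp(3) by auto
    then have h1: "cs ! 0 \<in> T" "cs ! 1 \<in> T" using csp(2) by (meson nth_mem subsetD)+
    have h2: "cs ! 0 \<noteq> cs ! 1" using csp(1) \<open>0 < length cs\<close> \<open>1 < length cs\<close> by (simp add: nth_eq_iff_index_eq)
    have h3: "\<forall>y. adj TE (cs ! 0) y \<longrightarrow> y = cs ! 1"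
    proof (intro allI impI)
      fix q assume a: "adj TE (cs ! 0) q"
      have qT: "q \<in> T" using a t unfolding treeT_def adj_def
        by (metis doubleton_eq_iff)
      show "q = cs ! 1"
      proof (cases "q \<in> set cs")
        case False
        have "\<forall>i. Suc i < length (q#cs) \<longrightarrow> adj TE ((q#cs)!i) ((q#cs)!Suc i)"
        proof (intro allI impI)
          fix i assume "Suc i < length (q#cs)"
          then show "adj TE ((q#cs)!i) ((q#cs)!Suc i)"
            using csp(4)[of "i-1"] a adj_sym by (cases i) auto
        qed
        then have "is_path T TE (q # cs)"
          unfolding is_path_def using csp False qT by auto
        then show ?thesis using mx by fastforce
      next
        case True
        then obtain i where i: "i < length cs" "cs ! i = q" by (auto simp: in_set_conv_nth)
        have "i \<noteq> 0"
        proof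
          assume "i = 0" then show False using a i by (simp add: adj_def)
        qed
        show ?thesis
        proof (rule ccontr)
          assume "q \<noteq> cs ! 1"
          then have "i \<noteq> 1" using i by auto
          then have i2: "2 \<le> i" using \<open>i \<noteq> 0\<close> by linarith
          let ?cs = "take (Suc i) cs"
          have "has_cycle TE"
            unfolding has_cycle_def
          proof (intro exI[of _ ?cs] conjI allI impI)
            show "3 \<le> length ?cs" using i i2 by auto
            show "distinct ?cs" using csp by auto
            fix j assume "Suc j < length ?cs"
            then show "adj TE (?cs ! j) (?cs ! Suc j)" using csp(4)[of j] i by auto
          next
            have "last ?cs = q" using i by (simp add: take_Suc_conv_app_nth)
            moreover have "hd ?cs = cs ! 0" using i by (cases cs) auto
            ultimately show "adj TE (last ?cs) (hd ?cs)" using a adj_sym by metis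
          qed
          then show False using t by (auto simp: treeT_def)
        qed
      qed
    qed
  show ?thesis using h1 h2 h3 by blast
qed

lemma leaf_only:
  assumes c: "connected_in TE S" and ls: "l \<in> S" "s \<in> S" "s \<noteq> l" and l: "\<forall>y. adj TE l y \<longrightarrow> y = l'"
  shows "l' \<in> S"
proof -
  let ?R = "{(a, b). a \<in> S \<and> b \<in> S \<and> adj TE a b}"
  have "(l, s) \<in> ?R\<^sup>*" using c ls unfolding connected_in_def by simp
  then obtain z where "(l, z) \<in> ?R" using ls(3) converse_rtranclE by metis
  then show ?thesis using l by auto
qed

lemma decT_D:
  assumes "decT T TE V B Sc"
  shows "treeT T TE" "\<And>t. t \<in> T \<Longrightarrow> B t \<subseteq> V" "\<And>v. v \<in> V \<Longrightarrow> \<exists>t\<in>T. v \<in> B t"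
    "\<And>S. S \<in> Sc \<Longrightarrow> \<exists>t\<in>T. S \<subseteq> B t" "\<And>v. v \<in> V \<Longrightarrow> connected_in TE {t\<in>T. v \<in> B t}"
  using assms unfolding decT_def by auto

lemma elim_vertex:
  assumes "decT T TE V B Sc" "V \<noteq> {}"
  shows "\<exists>v\<in>V. \<exists>t\<in>T. v \<in> B t \<and> (\<forall>S\<in>Sc. v \<in> S \<longrightarrow> S \<subseteq> B t)"
  using assms
proof (induction "card T" arbitrary: T TE rule: less_induct)
  case less
  note D = decT_D[OF less.prems(1)]
  have t: "treeT T TE" and fin: "finite T" using D(1) by (auto simp: treeT_def)
  show ?case
  proof (cases "card T < 2")
    case True
    have "card T \<noteq> 0" using t fin by (auto simp: treeT_def)
    then have "card T = 1" using True by linarith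
    then obtain t0 where T: "T = {t0}" by (rule card_1_singletonE)
    obtain v where v: "v \<in> V" using less.prems by auto
    have "v \<in> B t0" using D(3)[OF v] T by auto
    moreover have "\<forall>S\<in>Sc. S \<subseteq> B t0" using D(4) T by blast
    ultimately show ?thesis using v T by blast
  next
    case False
    then obtain l l' where l: "l \<in> T" "l' \<in> T" "l \<noteq> l'" "\<forall>y. adj TE l y \<longrightarrow> y = l'"
      using tree_leaf[OF t] by auto
    show ?thesis
    proof (cases "B l \<subseteq> B l'")
      case False
      then obtain v where v: "v \<in> B l" "v \<notin> B l'" by auto
      have vV: "v \<in> V" using v D(2)[OF l(1)] by auto
      have only: "\<And>s. s \<in> T \<Longrightarrow> v \<in> B s \<Longrightarrow> s = l"
      proof (rule ccontr)
        fix s assume s: "s \<in> T" "v \<in> B s" "s \<noteq> l"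
        have "l' \<in> {t\<in>T. v \<in> B t}"
          by (rule leaf_only[OF D(5)[OF vV] _ _ s(3) l(4)]) (use s l v in auto)
        then show False using v by auto
      qed
      have "\<forall>S\<in>Sc. v \<in> S \<longrightarrow> S \<subseteq> B l"
      proof (intro ballI impI)
        fix S assume S: "S \<in> Sc" "v \<in> S"
        then obtain s where "s \<in> T" "S \<subseteq> B s" using D(4) by blast
        then show "S \<subseteq> B l" using only S by auto
      qed
      then show ?thesis using vV l(1) v(1) by blast
    next
      case True
      let ?T = "T - {l}" and ?TE = "{e\<in>TE. l \<notin> e}"
      have "decT ?T ?TE V B Sc"
        unfolding decT_def
      proof (intro conjI ballI)
        show "treeT ?T ?TE" using treeT_remove[OF t l] .
        show "\<And>t. t \<in> ?T \<Longrightarrow> B t \<subseteq> V" using D(2) by auto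
        fix v assume v: "v \<in> V"
        then obtain s where s: "s \<in> T" "v \<in> B s" using D(3) by blast
        show "\<exists>t\<in>?T. v \<in> B t"
          using s True l by (cases "s = l") auto
        have "connected_in TE {t\<in>T. v \<in> B t}" using D(5)[OF v] .
        from conn_remove[OF this l(4)] True
        have "connected_in ?TE ({t\<in>T. v \<in> B t} - {l})" using l by auto
        moreover have "{t\<in>T. v \<in> B t} - {l} = {t\<in>?T. v \<in> B t}" by auto
        ultimately show "connected_in ?TE {t\<in>?T. v \<in> B t}" by simp
      next
        fix S assume "S \<in> Sc"
        then obtain s where s: "s \<in> T" "S \<subseteq> B s" using D(4) by blast
        show "\<exists>t\<in>?T. S \<subseteq> B t"
          using s True l by (cases "s = l") auto
      qed
      moreover have "card ?T < card T" using fin l(1) by (rule card_Diff1_less)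
      ultimately have "\<exists>v\<in>V. \<exists>t\<in>?T. v \<in> B t \<and> (\<forall>S\<in>Sc. v \<in> S \<longrightarrow> S \<subseteq> B t)"
        using less.hyps[of ?T ?TE] less.prems(2) by blast
      then show ?thesis by blast
    qed
  qed
qed


definition asg :: "nat \<Rightarrow> nat set \<Rightarrow> (nat \<Rightarrow> nat) set" where
  "asg N V = {\<phi>. (\<forall>u\<in>V. \<phi> u < N) \<and> (\<forall>u. u \<notin> V \<longrightarrow> \<phi> u = 0)}"

lemma asg_insert:
  assumes "v \<notin> V"
  shows "asg N (insert v V) = (\<lambda>(\<psi>, a). \<psi>(v := a)) ` (asg N V \<times> {..<N})"
proof
  show "(\<lambda>(\<psi>, a). \<psi>(v := a)) ` (asg N V \<times> {..<N}) \<subseteq> asg N (insert v V)"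
    by (auto simp: asg_def)
  show "asg N (insert v V) \<subseteq> (\<lambda>(\<psi>, a). \<psi>(v := a)) ` (asg N V \<times> {..<N})"
  proof
    fix \<phi> assume p: "\<phi> \<in> asg N (insert v V)"
    have "\<phi>(v := 0) \<in> asg N V" "\<phi> v < N" using p assms by (auto simp: asg_def)
    moreover have "\<phi> = (\<lambda>(\<psi>, a). \<psi>(v := a)) (\<phi>(v := 0), \<phi> v)" by simp
    ultimately show "\<phi> \<in> (\<lambda>(\<psi>, a). \<psi>(v := a)) ` (asg N V \<times> {..<N})"
      by (intro image_eqI[where x="(\<phi>(v := 0), \<phi> v)"]) auto
  qed
qed

lemma asg_inj:
  assumes "v \<notin> V"
  shows "inj_on (\<lambda>(\<psi>, a). \<psi>(v := a)) (asg N V \<times> A)"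
proof (rule inj_onI)
  fix x y assume x: "x \<in> asg N V \<times> A" and y: "y \<in> asg N V \<times> A"
    and e: "(case x of (\<psi>, a) \<Rightarrow> \<psi>(v := a)) = (case y of (\<psi>, a) \<Rightarrow> \<psi>(v := a))"
  obtain \<psi> a \<psi>' a' where xy: "x = (\<psi>, a)" "y = (\<psi>', a')" by fastforce
  have "\<psi> v = 0" "\<psi>' v = 0" using x y xy assms by (auto simp: asg_def)
  moreover have eq: "\<psi>(v := a) = \<psi>'(v := a')" using e xy by simp
  ultimately have "a = a'" "\<psi> = \<psi>'"
  proof -
    have "a = (\<psi>(v := a)) v" by simp
    also have "\<dots> = (\<psi>'(v := a')) v" using eq by simp
    finally show "a = a'" by simp
    show "\<psi> = \<psi>'"
    proof
      fix u show "\<psi> u = \<psi>' u"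
      proof (cases "u = v")
        case True then show ?thesis using \<open>\<psi> v = 0\<close> \<open>\<psi>' v = 0\<close> by simp
      next
        case False
        have "\<psi> u = (\<psi>(v := a)) u" using False by simp
        also have "\<dots> = (\<psi>'(v := a')) u" using eq by simp
        finally show ?thesis using False by simp
      qed
    qed
  qed
  then show "x = y" using xy by simp
qed

lemma asg_empty[simp]: "asg N {} = {\<lambda>_. 0}"
  by (auto simp: asg_def)

lemma finite_card_asg:
  assumes "finite V" shows "finite (asg N V) \<and> card (asg N V) = N ^ card V"
  using assms
proof (induction V rule: finite_induct)
  case empty then show ?case by simp
next
  case (insert v V)
  have "card (asg N (insert v V)) = card (asg N V \<times> {..<N})"
    unfolding asg_insert[OF insert(2)] by (rule card_image[OF asg_inj[OF insert(2)]])
  moreover have "finite (asg N (insert v V))"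
    unfolding asg_insert[OF insert(2)] using insert by auto
  ultimately show ?case using insert by (simp add: card_cartesian_product)
qed

lemma sum_asg_insert:
  assumes "v \<notin> V" "finite V"
  shows "(\<Sum>\<phi>\<in>asg N (insert v V). F \<phi>) = (\<Sum>\<psi>\<in>asg N V. \<Sum>a<N. F (\<psi>(v := a)))"
proof -
  have "(\<Sum>\<phi>\<in>asg N (insert v V). F \<phi>) = (\<Sum>x\<in>asg N V \<times> {..<N}. F (case x of (\<psi>, a) \<Rightarrow> \<psi>(v := a)))"
    unfolding asg_insert[OF assms(1)] by (rule sum.reindex[OF asg_inj[OF assms(1)], unfolded comp_def])
  also have "\<dots> = (\<Sum>\<psi>\<in>asg N V. \<Sum>a<N. F (\<psi>(v := a)))"
    by (subst sum.cartesian_product) (simp add: split_def)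
  finally show ?thesis .
qed

definition localf :: "nat set \<Rightarrow> ((nat \<Rightarrow> nat) \<Rightarrow> 'b) \<Rightarrow> bool" where
  "localf S g \<longleftrightarrow> (\<forall>\<phi> \<psi>. (\<forall>u\<in>S. \<phi> u = \<psi> u) \<longrightarrow> g \<phi> = g \<psi>)"

definition SP :: "nat \<Rightarrow> nat set \<Rightarrow> (nat set \<times> ((nat \<Rightarrow> nat) \<Rightarrow> 'r::comm_ring_1)) list \<Rightarrow> 'r" where
  "SP N V fs = (\<Sum>\<phi>\<in>asg N V. prod_list (map (\<lambda>f. snd f \<phi>) fs))"

definition elimf :: "nat \<Rightarrow> nat \<Rightarrow> (nat set \<times> ((nat \<Rightarrow> nat) \<Rightarrow> 'r::comm_ring_1)) list \<Rightarrow> (nat \<Rightarrow> nat) \<Rightarrow> 'r" where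
  "elimf N v fs1 \<psi> = (\<Sum>a<N. prod_list (map (\<lambda>f. snd f (\<psi>(v := a))) fs1))"

lemma elim_SP:
  assumes "finite V" "v \<in> V" "\<forall>f\<in>set fs2. localf (fst f) (snd f) \<and> v \<notin> fst f"
  shows "SP N V (fs1 @ fs2) = SP N (V - {v}) ((S, elimf N v fs1) # fs2)"
proof -
  have V: "V = insert v (V - {v})" using assms(2) by auto
  have loc: "\<And>\<psi> a. prod_list (map (\<lambda>f. snd f (\<psi>(v := a))) fs2) = prod_list (map (\<lambda>f. snd f \<psi>) fs2)"
  proof -
    fix \<psi> a
    have "\<And>f. f \<in> set fs2 \<Longrightarrow> snd f (\<psi>(v := a)) = snd f \<psi>"
      using assms(3) unfolding localf_def by auto
    then show "prod_list (map (\<lambda>f. snd f (\<psi>(v := a))) fs2) = prod_list (map (\<lambda>f. snd f \<psi>) fs2)"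
      by (simp cong: map_cong)
  qed
  have "SP N V (fs1 @ fs2) = (\<Sum>\<psi>\<in>asg N (V - {v}). \<Sum>a<N.
           prod_list (map (\<lambda>f. snd f (\<psi>(v := a))) (fs1 @ fs2)))"
    unfolding SP_def by (subst V, rule sum_asg_insert) (use assms in auto)
  also have "\<dots> = (\<Sum>\<psi>\<in>asg N (V - {v}). elimf N v fs1 \<psi> * prod_list (map (\<lambda>f. snd f \<psi>) fs2))"
    by (simp add: elimf_def loc sum_distrib_right)
  also have "\<dots> = SP N (V - {v}) ((S, elimf N v fs1) # fs2)"
    by (simp add: SP_def)
  finally show ?thesis .
qed

lemma localf_elimf:
  assumes "\<forall>f\<in>set fs1. localf (fst f) (snd f)"
  shows "localf ((\<Union>f\<in>set fs1. fst f) - {v}) (elimf N v fs1)"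
  unfolding localf_def
proof (intro allI impI)
  fix \<phi> \<psi> :: "nat \<Rightarrow> nat" assume e: "\<forall>u\<in>(\<Union>f\<in>set fs1. fst f) - {v}. \<phi> u = \<psi> u"
  have "\<And>(a::nat) f. f \<in> set fs1 \<Longrightarrow> snd f (\<phi>(v := a)) = snd f (\<psi>(v := a))"
  proof -
    fix a :: nat and f assume f: "f \<in> set fs1"
    have "\<forall>u\<in>fst f. (\<phi>(v := a)) u = (\<psi>(v := a)) u" using e f by auto
    moreover have L: "localf (fst f) (snd f)" using assms f by blast
    ultimately show "snd f (\<phi>(v := a)) = snd f (\<psi>(v := a))"
      using L[unfolded localf_def, rule_format] by blast
  qed
  then show "elimf N v fs1 \<phi> = elimf N v fs1 \<psi>"
    unfolding elimf_def by (simp cong: map_cong)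
qed

lemma prod_list_filter_split:
  "prod_list (map g xs) = prod_list (map g (filter P xs)) * prod_list (map g (filter (\<lambda>x. \<not> P x) xs))"
  for g :: "_ \<Rightarrow> 'r::comm_monoid_mult"
  by (induction xs) (auto simp: algebra_simps)

lemma SP_filter_split:
  "SP N V fs = SP N V (filter P fs @ filter (\<lambda>x. \<not> P x) fs)"
  unfolding SP_def by (simp add: prod_list_filter_split[of _ fs P])

lemma SP_empty: "SP N {} fs = prod_list (map (\<lambda>f. snd f (\<lambda>_. 0)) fs)"
  by (simp add: SP_def)

definition restr :: "nat set \<Rightarrow> (nat \<Rightarrow> nat) \<Rightarrow> nat \<Rightarrow> nat" where
  "restr S \<phi> = (\<lambda>u. if u \<in> S then \<phi> u else 0)"

lemma restr_asg: "(\<forall>u\<in>S. \<phi> u < N) \<Longrightarrow> restr S \<phi> \<in> asg N S"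
  by (auto simp: restr_def asg_def)

lemma localf_restr: "localf S g \<Longrightarrow> g (restr S \<phi>) = g \<phi>"
  unfolding localf_def restr_def by auto

definition tab :: "nat \<Rightarrow> ('v,'a::comm_ring_1) gate list \<Rightarrow> nat set \<Rightarrow> ((nat \<Rightarrow> nat) \<Rightarrow> ('v,'a) mpoly) \<Rightarrow> bool" where
  "tab N gs S g \<longleftrightarrow> (\<forall>\<phi>\<in>asg N S. has gs (g \<phi>))"

lemma tab_ext: "tab N gs S g \<Longrightarrow> ext gs gs' \<Longrightarrow> tab N gs' S g"
  unfolding tab_def using has_ext by blast

lemma tab_has:
  assumes "tab N gs S g" "localf S g" "\<forall>u\<in>S. \<phi> u < N"
  shows "has gs (g \<phi>)"
proof -
  have "has gs (g (restr S \<phi>))" using assms(1) restr_asg[OF assms(3)] unfolding tab_def by blast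
  then show ?thesis using localf_restr[OF assms(2)] by simp
qed


definition zf :: "nat \<Rightarrow> nat set \<times> ((nat \<Rightarrow> nat) \<Rightarrow> (hvar, 'a::comm_ring_1) mpoly)" where
  "zf u = ({u}, \<lambda>\<phi>. mvar (Zv u (\<phi> u)))"

definition yf :: "nat \<Rightarrow> nat set \<Rightarrow> nat set \<times> ((nat \<Rightarrow> nat) \<Rightarrow> (hvar, 'a::comm_ring_1) mpoly)" where
  "yf N e = (e, \<lambda>\<phi>. if \<phi> ` e \<in> complete_edges N then mvar (Yv (\<phi> ` e)) else 0)"

definition fs0 :: "nat \<Rightarrow> nat \<Rightarrow> nat set list \<Rightarrow> (nat set \<times> ((nat \<Rightarrow> nat) \<Rightarrow> (hvar, 'a::comm_ring_1) mpoly)) list" where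
  "fs0 N n es = map zf [0..<n] @ map (yf N) es"

lemma wf_graph_fin:
  assumes "wf_graph n E"
  shows "finite E" "card E \<le> n * n" "E \<subseteq> (\<lambda>(u, v). {u, v}) ` ({..<n} \<times> {..<n})"
proof -
  show s: "E \<subseteq> (\<lambda>(u, v). {u, v}) ` ({..<n} \<times> {..<n})"
    using assms unfolding wf_graph_def by fastforce
  show "finite E" using s finite_subset by blast
  have "card E \<le> card ((\<lambda>(u, v). {u, v}) ` ({..<n} \<times> {..<n}))"
    using s by (intro card_mono) auto
  also have "\<dots> \<le> card ({..<n} \<times> {..<n})" by (rule card_image_le) auto
  finally show "card E \<le> n * n" by (simp add: card_cartesian_product)
qed

lemma hom_poly_SP:
  assumes g: "wf_graph n EG" and es: "set es = EG" "distinct es"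
  shows "(hom_poly n EG N (complete_edges N) :: (hvar, 'a::comm_ring_1) mpoly) = SP N {0..<n} (fs0 N n es)"
proof -
  have fin: "finite EG" using wf_graph_fin[OF g] by simp
  let ?Z = "\<lambda>\<phi>. (\<Prod>u\<in>{0..<n}. mvar (Zv u (\<phi> u)) :: (hvar, 'a) mpoly)"
  let ?Y = "\<lambda>\<phi> e. (if \<phi> ` e \<in> complete_edges N then mvar (Yv (\<phi> ` e)) else 0 :: (hvar, 'a) mpoly)"
  have SP: "SP N {0..<n} (fs0 N n es) = (\<Sum>\<phi>\<in>asg N {0..<n}. ?Z \<phi> * (\<Prod>e\<in>EG. ?Y \<phi> e))"
    unfolding SP_def fs0_def
    by (simp add: zf_def yf_def o_def prod.distinct_set_conv_list[symmetric] es flip: atLeastLessThan_upt)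
  have sub: "homs n EG N (complete_edges N) \<subseteq> asg N {0..<n}"
    by (auto simp: homs_def asg_def)
  have "hom_poly n EG N (complete_edges N) = (\<Sum>\<phi>\<in>homs n EG N (complete_edges N). ?Z \<phi> * (\<Prod>e\<in>EG. mvar (Yv (\<phi> ` e))))"
    by (simp add: hom_poly_def)
  also have "\<dots> = (\<Sum>\<phi>\<in>asg N {0..<n}. ?Z \<phi> * (\<Prod>e\<in>EG. ?Y \<phi> e))"
  proof (rule sum.mono_neutral_cong_left)
    show "finite (asg N {0..<n})" using finite_card_asg by blast
    show "homs n EG N (complete_edges N) \<subseteq> asg N {0..<n}" by (rule sub)
    show "\<forall>i\<in>asg N {0..<n} - homs n EG N (complete_edges N). ?Z i * (\<Prod>e\<in>EG. ?Y i e) = 0"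
    proof
      fix \<phi> assume p: "\<phi> \<in> asg N {0..<n} - homs n EG N (complete_edges N)"
      then have "\<exists>e\<in>EG. \<phi> ` e \<notin> complete_edges N" by (auto simp: homs_def asg_def)
      then have "(\<Prod>e\<in>EG. ?Y \<phi> e) = 0" using fin by (intro prod_zero) auto
      then show "?Z \<phi> * (\<Prod>e\<in>EG. ?Y \<phi> e) = 0" by simp
    qed
    fix \<phi> assume "\<phi> \<in> homs n EG N (complete_edges N)"
    then have "\<forall>e\<in>EG. \<phi> ` e \<in> complete_edges N" by (auto simp: homs_def)
    then show "?Z \<phi> * (\<Prod>e\<in>EG. mvar (Yv (\<phi> ` e))) = ?Z \<phi> * (\<Prod>e\<in>EG. ?Y \<phi> e)"
      by (simp cong: prod.cong)
  qed
  finally show ?thesis using SP by simp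
qed

lemma prod_mvar:
  "finite A \<Longrightarrow> (\<Prod>i\<in>A. mvar (f i) :: ('v, 'a::comm_ring_1) mpoly) =
     Poly_Mapping.single (\<Sum>i\<in>A. Poly_Mapping.single (f i) 1) 1"
  by (induction A rule: finite_induct) (auto simp: mvar_def mult_single)

definition mono_of :: "nat \<Rightarrow> nat set set \<Rightarrow> (nat \<Rightarrow> nat) \<Rightarrow> hvar \<Rightarrow>\<^sub>0 nat" where
  "mono_of n EG \<phi> = (\<Sum>u\<in>{0..<n}. Poly_Mapping.single (Zv u (\<phi> u)) 1) + (\<Sum>e\<in>EG. Poly_Mapping.single (Yv (\<phi> ` e)) 1)"

lemma hom_poly_mono:
  assumes "finite EG"
  shows "(hom_poly n EG N EH :: (hvar, 'a::comm_ring_1) mpoly) =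
    (\<Sum>\<phi>\<in>homs n EG N EH. Poly_Mapping.single (mono_of n EG \<phi>) 1)"
  unfolding hom_poly_def mono_of_def using assms by (simp add: prod_mvar mult_single)

lemma mono_deg_eq:
  assumes "finite K" "Poly_Mapping.keys \<mu> \<subseteq> K"
  shows "mono_deg \<mu> = sum (Poly_Mapping.lookup \<mu>) K"
  unfolding mono_deg_def
  by (rule sum.mono_neutral_left) (use assms in \<open>auto simp: in_keys_iff\<close>)

lemma mono_deg_add: "mono_deg (a + b) = mono_deg a + mono_deg b"
proof -
  let ?K = "Poly_Mapping.keys a \<union> Poly_Mapping.keys b"
  have "mono_deg (a + b) = sum (Poly_Mapping.lookup (a + b)) ?K"
    by (rule mono_deg_eq) (auto simp: keys_add)
  also have "\<dots> = sum (Poly_Mapping.lookup a) ?K + sum (Poly_Mapping.lookup b) ?K"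
    by (simp add: lookup_add sum.distrib)
  also have "\<dots> = mono_deg a + mono_deg b"
    using mono_deg_eq[of ?K a] mono_deg_eq[of ?K b] by simp
  finally show ?thesis .
qed

lemma mono_deg_0[simp]: "mono_deg 0 = 0" by (simp add: mono_deg_def)
lemma mono_deg_single1[simp]: "mono_deg (Poly_Mapping.single x (1::nat)) = 1" by (simp add: mono_deg_def)

lemma mono_deg_singleS[simp]: "mono_deg (Poly_Mapping.single x (Suc 0)) = 1" by (simp add: mono_deg_def)

lemma mono_deg_sum: "mono_deg (sum f A) = (\<Sum>x\<in>A. mono_deg (f x))"
  by (induction A rule: infinite_finite_induct) (auto simp: mono_deg_add)

lemma mono_deg_mono_of: "finite EG \<Longrightarrow> mono_deg (mono_of n EG \<phi>) = n + card EG"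
  by (simp add: mono_of_def mono_deg_add mono_deg_sum)

lemma keys_mono_of:
  assumes g: "wf_graph n EG" and p: "\<phi> \<in> homs n EG N EH"
  shows "Poly_Mapping.keys (mono_of n EG \<phi>) \<subseteq>
     (\<lambda>(u, a). Zv u a) ` ({..<n} \<times> {..<N}) \<union> (\<lambda>(a, b). Yv {a, b}) ` ({..<N} \<times> {..<N})"
proof -
  have "Poly_Mapping.keys (mono_of n EG \<phi>) \<subseteq>
     (\<Union>u\<in>{0..<n}. Poly_Mapping.keys (Poly_Mapping.single (Zv u (\<phi> u)) (1::nat))) \<union>
     (\<Union>e\<in>EG. Poly_Mapping.keys (Poly_Mapping.single (Yv (\<phi> ` e)) (1::nat)))"
  proof -
    have "Poly_Mapping.keys (mono_of n EG \<phi>) \<subseteq> Poly_Mapping.keys (\<Sum>u\<in>{0..<n}. Poly_Mapping.single (Zv u (\<phi> u)) (1::nat))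
       \<union> Poly_Mapping.keys (\<Sum>e\<in>EG. Poly_Mapping.single (Yv (\<phi> ` e)) (1::nat))"
      unfolding mono_of_def by (rule keys_add)
    also have "\<dots> \<subseteq> (\<Union>u\<in>{0..<n}. Poly_Mapping.keys (Poly_Mapping.single (Zv u (\<phi> u)) (1::nat))) \<union>
     (\<Union>e\<in>EG. Poly_Mapping.keys (Poly_Mapping.single (Yv (\<phi> ` e)) (1::nat)))"
      by (intro Un_mono keys_sum)
    finally show ?thesis .
  qed
  also have "\<dots> \<subseteq> (\<lambda>(u, a). Zv u a) ` ({..<n} \<times> {..<N}) \<union> (\<lambda>(a, b). Yv {a, b}) ` ({..<N} \<times> {..<N})"
  proof -
    have "\<And>u. u < n \<Longrightarrow> \<phi> u < N" using p by (auto simp: homs_def)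
    moreover have "\<And>e. e \<in> EG \<Longrightarrow> \<exists>a b. a < N \<and> b < N \<and> \<phi> ` e = {a, b}"
    proof -
      fix e assume "e \<in> EG"
      then obtain u v where "u < n" "v < n" "e = {u, v}" using g by (auto simp: wf_graph_def)
      then show "\<exists>a b. a < N \<and> b < N \<and> \<phi> ` e = {a, b}" using p by (auto simp: homs_def)
    qed
    ultimately show ?thesis by fastforce
  qed
  finally show ?thesis .
qed

lemma hom_poly_vars_deg:
  assumes g: "wf_graph n EG"
  shows "mpoly_vars (hom_poly n EG N EH :: (hvar, 'a::field) mpoly) \<subseteq>
     (\<lambda>(u, a). Zv u a) ` ({..<n} \<times> {..<N}) \<union> (\<lambda>(a, b). Yv {a, b}) ` ({..<N} \<times> {..<N})"
    "mpoly_deg (hom_poly n EG N EH :: (hvar, 'a::field) mpoly) \<le> n + n * n"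
proof -
  have fin: "finite EG" using wf_graph_fin[OF g] by simp
  let ?p = "hom_poly n EG N EH :: (hvar, 'a::field) mpoly"
  have k: "Poly_Mapping.keys ?p \<subseteq> mono_of n EG ` homs n EG N EH"
  proof -
    have "Poly_Mapping.keys ?p \<subseteq> (\<Union>\<phi>\<in>homs n EG N EH. Poly_Mapping.keys (Poly_Mapping.single (mono_of n EG \<phi>) (1::'a)))"
      unfolding hom_poly_mono[OF fin] by (rule keys_sum)
    then show ?thesis by auto
  qed
  show "mpoly_vars ?p \<subseteq> (\<lambda>(u, a). Zv u a) ` ({..<n} \<times> {..<N}) \<union> (\<lambda>(a, b). Yv {a, b}) ` ({..<N} \<times> {..<N})"
    unfolding mpoly_vars_def using k keys_mono_of[OF g] by blast
  have "\<forall>x\<in>insert 0 (mono_deg ` Poly_Mapping.keys ?p). x \<le> n + n * n"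
    using k mono_deg_mono_of[OF fin] wf_graph_fin(2)[OF g] by auto
  then show "mpoly_deg ?p \<le> n + n * n"
    unfolding mpoly_deg_def by (intro Max.boundedI) auto
qed


lemma sum_lessThan_list: "(\<Sum>a<N. g a) = sum_list (map g [0..<N])"
  by (simp add: sum_set_upt_conv_sum_list_nat[symmetric] lessThan_atLeast0)

lemma card_asg_le:
  assumes "finite S" "card S \<le> w" shows "card (asg N S) \<le> (N + 1) ^ w"
proof -
  have "card (asg N S) = N ^ card S" using finite_card_asg[OF assms(1)] by simp
  also have "\<dots> \<le> (N + 1) ^ card S" by (simp add: power_mono)
  also have "\<dots> \<le> (N + 1) ^ w" using assms(2) by (simp add: power_increasing)
  finally show ?thesis .
qed

lemma VP_step:
  fixes fs1 :: "(nat set \<times> ((nat \<Rightarrow> nat) \<Rightarrow> ('v, 'a::comm_ring_1) mpoly)) list"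
  assumes ok: "okc False gs" and tabs: "\<forall>f\<in>set fs1. tab N gs (fst f) (snd f) \<and> localf (fst f) (snd f)"
    and S: "S = (\<Union>f\<in>set fs1. fst f) - {v}" "finite S" "card S \<le> w"
  shows "builds False gs ((N + 1) ^ w * (N * (length fs1 + 1) + N + 1)) (\<lambda>gs'. tab N gs' S (elimf N v fs1))"
proof -
  let ?P = "\<lambda>gs. \<forall>f\<in>set fs1. tab N gs (fst f) (snd f)"
  let ?C = "N * (length fs1 + 1) + N + 1"
  have "builds False gs (?C * card (asg N S)) (\<lambda>gs'. ?P gs' \<and> (\<forall>\<psi>\<in>asg N S. has gs' (elimf N v fs1 \<psi>)))"
  proof (rule builds_iter)
    show "finite (asg N S)" using finite_card_asg[OF S(2)] by blast
    show "okc False gs" by (rule ok)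
    show "?P gs" using tabs by blast
    show "\<And>gs gs'. ?P gs \<Longrightarrow> ext gs gs' \<Longrightarrow> ?P gs'" using tab_ext by blast
    show "\<And>x gs gs'. has gs (elimf N v fs1 x) \<Longrightarrow> ext gs gs' \<Longrightarrow> has gs' (elimf N v fs1 x)"
      using has_ext by blast
  next
    fix \<psi> gs assume psi: "\<psi> \<in> asg N S" and ok1: "okc False gs" and P: "?P gs"
    let ?g = "\<lambda>a. prod_list (map (\<lambda>f. snd f (\<psi>(v := a))) fs1)"
    have "builds False gs ((length fs1 + 1) * card {0..<N} + (length [0..<N] + 1))
            (\<lambda>gs'. has gs' (sum_list (map ?g [0..<N])))"
    proof (rule builds_seq)
      show "builds False gs ((length fs1 + 1) * card {0..<N})
              (\<lambda>gs'. ?P gs' \<and> (\<forall>a\<in>{0..<N}. has gs' (?g a)))"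
      proof (rule builds_iter)
        show "finite {0..<N}" "okc False gs" "?P gs" using ok1 P by auto
        show "\<And>gs gs'. ?P gs \<Longrightarrow> ext gs gs' \<Longrightarrow> ?P gs'" using tab_ext by blast
        show "\<And>x gs gs'. has gs (?g x) \<Longrightarrow> ext gs gs' \<Longrightarrow> has gs' (?g x)"
          using has_ext by blast
      next
        fix a gs assume a: "a \<in> {0..<N}" and ok2: "okc False gs" and P2: "?P gs"
        have "\<forall>f\<in>set fs1. has gs (snd f (\<psi>(v := a)))"
        proof
          fix f assume f: "f \<in> set fs1"
          have "\<forall>u\<in>fst f. (\<psi>(v := a)) u < N"
            using a psi f S(1) by (auto simp: asg_def)
          then show "has gs (snd f (\<psi>(v := a)))"
            using tab_has[of N gs "fst f" "snd f"] P2 tabs f by blast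
        qed
        then show "builds False gs (length fs1 + 1) (\<lambda>gs'. has gs' (?g a))"
          using build_prod_list[OF ok2, of fs1 "\<lambda>f. snd f (\<psi>(v := a))"] by simp
      qed
    next
      fix gs1 assume "ext gs gs1" "okc False gs1" "?P gs1 \<and> (\<forall>a\<in>{0..<N}. has gs1 (?g a))"
      then show "builds False gs1 (length [0..<N] + 1) (\<lambda>gs'. has gs' (sum_list (map ?g [0..<N])))"
        using build_sum_list[of False gs1 "[0..<N]" ?g] by auto
    qed
    then show "builds False gs ?C (\<lambda>gs'. has gs' (elimf N v fs1 \<psi>))"
      by (simp add: elimf_def sum_lessThan_list algebra_simps)
  qed
  moreover have "?C * card (asg N S) \<le> ?C * (N + 1) ^ w"
    by (rule mult_le_mono2[OF card_asg_le[OF S(2,3)]])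
  then have "?C * card (asg N S) \<le> (N + 1) ^ w * ?C" by (metis mult.commute)
  ultimately have "builds False gs ((N + 1) ^ w * ?C) (\<lambda>gs'. ?P gs' \<and> (\<forall>\<psi>\<in>asg N S. has gs' (elimf N v fs1 \<psi>)))"
    by (rule builds_mono_cost)
  then show ?thesis unfolding tab_def by (rule builds_mono) blast
qed

lemma decT_elim:
  assumes d: "decT T TE V B Sc" and v: "v \<in> V" and t: "t \<in> T"
    and Sc': "\<forall>S\<in>Sc'. (S \<in> Sc \<and> v \<notin> S) \<or> S \<subseteq> B t - {v}"
  shows "decT T TE (V - {v}) (\<lambda>s. B s - {v}) Sc'"
proof -
  note D = decT_D[OF d]
  show ?thesis unfolding decT_def
  proof (intro conjI ballI)
    show "treeT T TE" by (rule D(1))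
    show "\<And>s. s \<in> T \<Longrightarrow> B s - {v} \<subseteq> V - {v}" using D(2) by blast
    fix u assume u: "u \<in> V - {v}"
    then show "\<exists>s\<in>T. u \<in> B s - {v}" using D(3)[of u] by auto
    have "{s \<in> T. u \<in> B s - {v}} = {s \<in> T. u \<in> B s}" using u by auto
    then show "connected_in TE {s \<in> T. u \<in> B s - {v}}" using D(5)[of u] u by simp
  next
    fix S assume S: "S \<in> Sc'"
    show "\<exists>s\<in>T. S \<subseteq> B s - {v}"
    proof (cases "S \<subseteq> B t - {v}")
      case True then show ?thesis using t by blast
    next
      case False
      then have "S \<in> Sc" "v \<notin> S" using Sc' S by auto
      then show ?thesis using D(4)[of S] by blast
    qed
  qed
qed

lemma VP_main:
  fixes fs :: "(nat set \<times> ((nat \<Rightarrow> nat) \<Rightarrow> ('v, 'a::comm_ring_1) mpoly)) list"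
  assumes "finite V" "decT T TE V B (fst ` set fs)" "\<forall>t\<in>T. card (B t) \<le> w"
    "\<forall>f\<in>set fs. tab N gs (fst f) (snd f) \<and> localf (fst f) (snd f)"
    "okc False gs" "length fs + card V \<le> L"
  shows "builds False gs (card V * ((N + 1) ^ w * (N * (L + 1) + N + 1)) + (L + 1)) (\<lambda>gs'. has gs' (SP N V fs))"
  using assms
proof (induction "card V" arbitrary: V B fs gs)
  case 0
  then have V: "V = {}" by simp
  have emp: "\<forall>f\<in>set fs. fst f = {}"
  proof
    fix f assume "f \<in> set fs"
    then obtain t where "t \<in> T" "fst f \<subseteq> B t" using decT_D(4)[OF 0(3)] by blast
    then show "fst f = {}" using decT_D(2)[OF 0(3)] V by blast
  qed
  have "\<forall>f\<in>set fs. has gs (snd f (\<lambda>_. 0))"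
  proof
    fix f assume f: "f \<in> set fs"
    show "has gs (snd f (\<lambda>_. 0))"
      using tab_has[of N gs "fst f" "snd f" "\<lambda>_. 0"] 0(5) f emp by auto
  qed
  then have "builds False gs (length fs + 1) (\<lambda>gs'. has gs' (SP N V fs))"
    using build_prod_list[OF 0(6), of fs "\<lambda>f. snd f (\<lambda>_. 0)"] V by (simp add: SP_empty)
  then show ?case using 0(7) V by (auto elim!: builds_mono_cost)
next
  case (Suc c)
  then have Vne: "V \<noteq> {}" by auto
  obtain v t where v: "v \<in> V" and t: "t \<in> T" "v \<in> B t" and sub: "\<forall>S\<in>fst ` set fs. v \<in> S \<longrightarrow> S \<subseteq> B t"
    using elim_vertex[OF Suc(4) Vne] by blast
  define fs1 where "fs1 = filter (\<lambda>f. v \<in> fst f) fs"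
  define fs2 where "fs2 = filter (\<lambda>f. \<not> v \<in> fst f) fs"
  define S where "S = (\<Union>f\<in>set fs1. fst f) - {v}"
  have BV: "B t \<subseteq> V" using decT_D(2)[OF Suc(4) t(1)] .
  have SB: "S \<subseteq> B t - {v}"
  proof
    fix x assume "x \<in> S"
    then obtain f where f: "f \<in> set fs" "v \<in> fst f" "x \<in> fst f" "x \<noteq> v"
      unfolding S_def fs1_def by auto
    then have "fst f \<subseteq> B t" using sub by blast
    then show "x \<in> B t - {v}" using f by blast
  qed
  have finB: "finite (B t)" using BV Suc(3) by (rule finite_subset)
  have finS: "finite S" using finite_subset[OF SB] finB by simp
  have cS: "card S \<le> w"
  proof -
    have "card S \<le> card (B t)" using SB finB by (intro card_mono) auto
    then show ?thesis using Suc(5) t by fastforce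
  qed
  let ?X = "(N + 1) ^ w * (N * (L + 1) + N + 1)"
  have "length fs1 \<le> length fs" by (simp add: fs1_def)
  then have lfs: "length fs1 \<le> L" using Suc(8) by linarith
  have BB: "builds False gs (?X + ((card V - 1) * ?X + (L + 1))) (\<lambda>gs'. has gs' (SP N V fs))"
  proof (rule builds_seq)
    have "builds False gs ((N + 1) ^ w * (N * (length fs1 + 1) + N + 1)) (\<lambda>gs'. tab N gs' S (elimf N v fs1))"
      by (rule VP_step[OF Suc(7) _ S_def finS cS]) (use Suc(6) in \<open>auto simp: fs1_def\<close>)
    moreover have "(N + 1) ^ w * (N * (length fs1 + 1) + N + 1) \<le> ?X"
    proof (rule mult_le_mono2)
      have "N * (length fs1 + 1) \<le> N * (L + 1)" using lfs by simp
      then show "N * (length fs1 + 1) + N + 1 \<le> N * (L + 1) + N + 1" by simp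
    qed
    ultimately have "builds False gs ?X (\<lambda>gs'. tab N gs' S (elimf N v fs1))"
      by (rule builds_mono_cost)
    then show "builds False gs ?X (\<lambda>gs'. tab N gs' S (elimf N v fs1) \<and> (\<forall>f\<in>set fs. tab N gs' (fst f) (snd f)))"
      by (rule builds_mono) (use Suc(6) tab_ext in blast)
  next
    fix gs1 assume e1: "ext gs gs1" "okc False gs1"
      and T1: "tab N gs1 S (elimf N v fs1) \<and> (\<forall>f\<in>set fs. tab N gs1 (fst f) (snd f))"
    let ?fs' = "(S, elimf N v fs1) # fs2"
    have eq: "SP N V fs = SP N (V - {v}) ?fs'"
      using SP_filter_split[of N V fs "\<lambda>f. v \<in> fst f"] elim_SP[OF Suc(3) v, of fs2 N fs1 S] Suc(6)
      by (auto simp: fs1_def fs2_def)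
    have "builds False gs1 (card (V - {v}) * ?X + (L + 1)) (\<lambda>gs'. has gs' (SP N (V - {v}) ?fs'))"
    proof (rule Suc(1))
      show "c = card (V - {v})" using Suc(2) v Suc(3) by simp
      show "finite (V - {v})" using Suc(3) by simp
      show "decT T TE (V - {v}) (\<lambda>s. B s - {v}) (fst ` set ?fs')"
        by (rule decT_elim[OF Suc(4) v t(1)]) (use SB in \<open>auto simp: fs2_def\<close>)
      show "\<forall>s\<in>T. card (B s - {v}) \<le> w"
        using Suc(5) by (metis card_Diff1_le dual_order.trans finite_Diff2 finite.emptyI finite_insert card.infinite le0)
      show "\<forall>f\<in>set ?fs'. tab N gs1 (fst f) (snd f) \<and> localf (fst f) (snd f)"
        using T1 Suc(6) localf_elimf[of fs1 v N] by (auto simp: fs2_def fs1_def S_def)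
      show "okc False gs1" by (rule e1(2))
      have "length fs1 + length fs2 = length fs"
        unfolding fs1_def fs2_def by (rule sum_length_filter_compl)
      moreover have "length fs1 \<ge> 0" by simp
      show "length ?fs' + card (V - {v}) \<le> L"
      proof -
        have "card (V - {v}) = c" using Suc(2) v Suc(3) by simp
        moreover have "length fs2 \<le> length fs" by (simp add: fs2_def)
        moreover have "fs1 \<noteq> [] \<or> True" by simp
        ultimately show ?thesis using Suc(8) Suc(2) by simp
      qed
    qed
    then show "builds False gs1 ((card V - 1) * ?X + (L + 1)) (\<lambda>gs'. has gs' (SP N V fs))"
      using eq v Suc(3) by simp
  qed
  have eq2: "?X + ((card V - 1) * ?X + (L + 1)) = card V * ?X + (L + 1)"
    using Vne Suc(3) by (cases "card V") auto
  show ?case using BB unfolding eq2 .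
qed


definition leafyf :: "((nat \<Rightarrow> nat) \<Rightarrow> ('v, 'a::comm_ring_1) mpoly) \<Rightarrow> bool" where
  "leafyf g \<longleftrightarrow> (\<forall>\<phi>. leafv (g \<phi>))"

lemma VBP_step:
  fixes I1 :: "(nat set \<times> ((nat \<Rightarrow> nat) \<Rightarrow> ('v, 'a::comm_ring_1) mpoly)) list"
  assumes ok: "okc True gs" and tD: "tab N gs SD D" "localf SD D"
    and lf: "\<forall>f\<in>set I1. leafyf (snd f)"
    and S: "S = (SD \<union> (\<Union>f\<in>set I1. fst f)) - {v}" "finite S" "card S \<le> w"
  shows "builds True gs ((N + 1) ^ w * (N * (2 * length I1) + N + 1)) (\<lambda>gs'. tab N gs' S (elimf N v ((SD, D) # I1)))"
proof -
  let ?P = "\<lambda>gs. tab N gs SD D"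
  let ?C = "N * (2 * length I1) + N + 1"
  let ?h = "elimf N v ((SD, D) # I1)"
  have "builds True gs (?C * card (asg N S)) (\<lambda>gs'. ?P gs' \<and> (\<forall>\<psi>\<in>asg N S. has gs' (?h \<psi>)))"
  proof (rule builds_iter)
    show "finite (asg N S)" using finite_card_asg[OF S(2)] by blast
    show "okc True gs" by (rule ok)
    show "?P gs" using tD by blast
    show "\<And>gs gs'. ?P gs \<Longrightarrow> ext gs gs' \<Longrightarrow> ?P gs'" using tab_ext by blast
    show "\<And>x gs gs'. has gs (?h x) \<Longrightarrow> ext gs gs' \<Longrightarrow> has gs' (?h x)"
      using has_ext by blast
  next
    fix \<psi> gs assume psi: "\<psi> \<in> asg N S" and ok1: "okc True gs" and P: "?P gs"
    let ?g = "\<lambda>a. prod_list (map (\<lambda>f. snd f (\<psi>(v := a))) ((SD, D) # I1))"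
    have "builds True gs ((2 * length I1) * card {0..<N} + (length [0..<N] + 1))
            (\<lambda>gs'. has gs' (sum_list (map ?g [0..<N])))"
    proof (rule builds_seq)
      show "builds True gs ((2 * length I1) * card {0..<N})
              (\<lambda>gs'. ?P gs' \<and> (\<forall>a\<in>{0..<N}. has gs' (?g a)))"
      proof (rule builds_iter)
        show "finite {0..<N}" "okc True gs" "?P gs" using ok1 P by auto
        show "\<And>gs gs'. ?P gs \<Longrightarrow> ext gs gs' \<Longrightarrow> ?P gs'" using tab_ext by blast
        show "\<And>x gs gs'. has gs (?g x) \<Longrightarrow> ext gs gs' \<Longrightarrow> has gs' (?g x)"
          using has_ext by blast
      next
        fix a gs assume a: "a \<in> {0..<N}" and ok2: "okc True gs" and P2: "?P gs"
        have "\<forall>u\<in>SD. (\<psi>(v := a)) u < N"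
          using a psi S(1) by (auto simp: asg_def)
        then have hD: "has gs (D (\<psi>(v := a)))"
          using tab_has[of N gs SD D] P2 tD by blast
        have "\<forall>f\<in>set I1. leafv (snd f (\<psi>(v := a)))" using lf by (auto simp: leafyf_def)
        from build_prod_leaves[OF ok2 hD, of I1 "\<lambda>f. snd f (\<psi>(v := a))"] this
        show "builds True gs (2 * length I1) (\<lambda>gs'. has gs' (?g a))" by simp
      qed
    next
      fix gs1 assume "ext gs gs1" "okc True gs1" "?P gs1 \<and> (\<forall>a\<in>{0..<N}. has gs1 (?g a))"
      then show "builds True gs1 (length [0..<N] + 1) (\<lambda>gs'. has gs' (sum_list (map ?g [0..<N])))"
        using build_sum_list[of True gs1 "[0..<N]" ?g] by auto
    qed
    then show "builds True gs ?C (\<lambda>gs'. has gs' (?h \<psi>))"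
      unfolding elimf_def sum_lessThan_list by (simp add: algebra_simps)
  qed
  moreover have "?C * card (asg N S) \<le> ?C * (N + 1) ^ w"
    by (rule mult_le_mono2[OF card_asg_le[OF S(2,3)]])
  then have "?C * card (asg N S) \<le> (N + 1) ^ w * ?C" by (metis mult.commute)
  ultimately have "builds True gs ((N + 1) ^ w * ?C) (\<lambda>gs'. ?P gs' \<and> (\<forall>\<psi>\<in>asg N S. has gs' (?h \<psi>)))"
    by (rule builds_mono_cost)
  then show ?thesis unfolding tab_def by (rule builds_mono) blast
qed

lemma pd_D:
  assumes "path_decomposition n E k B"
  shows "\<And>t. t < k \<Longrightarrow> B t \<subseteq> {0..<n}" "\<And>v. v < n \<Longrightarrow> \<exists>t<k. v \<in> B t"
    "\<And>v i j l. i \<le> l \<Longrightarrow> l \<le> j \<Longrightarrow> j < k \<Longrightarrow> v \<in> B i \<Longrightarrow> v \<in> B j \<Longrightarrow> v \<in> B l"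
proof -
  have H: "(\<forall>t<k. B t \<subseteq> {0..<n}) \<and> (\<forall>v<n. \<exists>t<k. v \<in> B t)
     \<and> (\<forall>v i j l. i \<le> l \<and> l \<le> j \<and> j < k \<and> v \<in> B i \<and> v \<in> B j \<longrightarrow> v \<in> B l)"
    using assms unfolding path_decomposition_def by (elim conjE) (intro conjI)
  show "\<And>t. t < k \<Longrightarrow> B t \<subseteq> {0..<n}" using H by blast
  show "\<And>v. v < n \<Longrightarrow> \<exists>t<k. v \<in> B t" using H by blast
  fix v i j l assume "i \<le> l" "l \<le> j" "j < k" "v \<in> B i" "v \<in> B j"
  then show "v \<in> B l" using H by blast
qed

context
  fixes n :: nat and E :: "nat set set" and k :: nat and B :: "nat \<Rightarrow> nat set"
  assumes pd: "path_decomposition n E k B"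
begin

definition Lst :: "nat \<Rightarrow> nat" where
  "Lst u = Max {t. t < k \<and> u \<in> B t}"

definition tau :: "nat set \<Rightarrow> nat" where
  "tau V = Min (Lst ` V)"

lemma Lst_props:
  assumes "u < n" shows "Lst u < k" "u \<in> B (Lst u)"
proof -
  obtain t where "t < k" "u \<in> B t" using pd_D(2)[OF pd assms] by blast
  then have ne: "{t. t < k \<and> u \<in> B t} \<noteq> {}" by blast
  have fin: "finite {t. t < k \<and> u \<in> B t}" by simp
  have "Lst u \<in> {t. t < k \<and> u \<in> B t}" unfolding Lst_def using Max_in[OF fin ne] .
  then show "Lst u < k" "u \<in> B (Lst u)" by auto
qed

lemma Lst_ge: "s < k \<Longrightarrow> u \<in> B s \<Longrightarrow> s \<le> Lst u"
  unfolding Lst_def by (rule Max_ge) auto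

lemma interval: "i \<le> l \<Longrightarrow> l \<le> j \<Longrightarrow> j < k \<Longrightarrow> u \<in> B i \<Longrightarrow> u \<in> B j \<Longrightarrow> u \<in> B l"
  by (rule pd_D(3)[OF pd])

lemma tau_props:
  assumes "finite V" "V \<noteq> {}"
  shows "\<exists>v\<in>V. Lst v = tau V" "\<And>u. u \<in> V \<Longrightarrow> tau V \<le> Lst u"
proof -
  have "tau V \<in> Lst ` V" unfolding tau_def using assms by (intro Min_in) auto
  then show "\<exists>v\<in>V. Lst v = tau V" by auto
  show "\<And>u. u \<in> V \<Longrightarrow> tau V \<le> Lst u" unfolding tau_def using assms by (intro Min_le) auto
qed

lemma VBP_main:
  fixes I :: "(nat set \<times> ((nat \<Rightarrow> nat) \<Rightarrow> ('v, 'a::comm_ring_1) mpoly)) list"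
  assumes "finite V" "V \<subseteq> {0..<n}" "\<forall>t<k. card (B t) \<le> w"
    "SD \<subseteq> V" "V \<noteq> {} \<longrightarrow> SD \<subseteq> B (tau V)" "localf SD D" "tab N gs SD D"
    "\<forall>f\<in>set I. fst f \<subseteq> V \<and> (\<exists>s<k. fst f \<subseteq> B s) \<and> localf (fst f) (snd f) \<and> leafyf (snd f)"
    "okc True gs" "length I \<le> L"
  shows "builds True gs (card V * ((N + 1) ^ w * (N * (2 * L) + N + 1)) + 2 * L)
           (\<lambda>gs'. has gs' (SP N V ((SD, D) # I)))"
  using assms
proof (induction "card V" arbitrary: V SD D I gs)
  case 0
  then have V: "V = {}" by simp
  then have SD: "SD = {}" using 0(5) by simp
  have hD: "has gs (D (\<lambda>_. 0))" using tab_has[of N gs SD D "\<lambda>_. 0"] 0(7,8) SD by simp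
  have "\<forall>f\<in>set I. leafv (snd f (\<lambda>_. 0))" using 0(9) by (auto simp: leafyf_def)
  from build_prod_leaves[OF 0(10) hD, of I "\<lambda>f. snd f (\<lambda>_. 0)"] this
  have "builds True gs (2 * length I) (\<lambda>gs'. has gs' (SP N V ((SD, D) # I)))"
    using V by (simp add: SP_empty)
  then show ?case using 0(11) by (auto elim!: builds_mono_cost)
next
  case (Suc c)
  then have Vne: "V \<noteq> {}" and finV: "finite V" by auto
  obtain v where v: "v \<in> V" "Lst v = tau V" using tau_props(1)[OF finV Vne] by blast
  have vn: "v < n" using v Suc(4) by auto
  define I1 where "I1 = filter (\<lambda>f. v \<in> fst f) I"
  define I2 where "I2 = filter (\<lambda>f. \<not> v \<in> fst f) I"
  define S where "S = (SD \<union> (\<Union>f\<in>set I1. fst f)) - {v}"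
  have tk: "tau V < k" using Lst_props(1)[OF vn] v by simp
  have SB: "S \<subseteq> B (tau V) - {v}"
  proof
    fix u assume u: "u \<in> S"
    then have uv: "u \<noteq> v" by (auto simp: S_def)
    show "u \<in> B (tau V) - {v}"
    proof (cases "u \<in> SD")
      case True then show ?thesis using Suc(7) Vne uv by auto
    next
      case False
      then obtain f where f: "f \<in> set I" "v \<in> fst f" "u \<in> fst f"
        using u unfolding S_def I1_def by auto
      obtain s where s: "s < k" "fst f \<subseteq> B s" using Suc(10) f(1) by blast
      have uV: "u \<in> V" using Suc(10) f by blast
      then have un: "u < n" using Suc(4) by auto
      have "s \<le> tau V" using Lst_ge[OF s(1), of v] s f v by auto
      moreover have "tau V \<le> Lst u" using tau_props(2)[OF finV Vne uV] .
      ultimately have "u \<in> B (tau V)"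
        using interval[of s "tau V" "Lst u" u] Lst_props[OF un] s f by auto
      then show ?thesis using uv by simp
    qed
  qed
  have SV: "S \<subseteq> V - {v}"
  proof
    fix u assume u: "u \<in> S"
    then have uv: "u \<noteq> v" by (auto simp: S_def)
    show "u \<in> V - {v}"
    proof (cases "u \<in> SD")
      case True then show ?thesis using Suc(6) uv by auto
    next
      case False
      then obtain f where f: "f \<in> set I" "u \<in> fst f"
        using u unfolding S_def I1_def by auto
      then have "fst f \<subseteq> V" using Suc(10) by blast
      then show ?thesis using f uv by auto
    qed
  qed
  have finB: "finite (B (tau V))" using pd_D(1)[OF pd tk] finite_subset by blast
  have finS: "finite S" using finite_subset[OF SB] finB by simp
  have cS: "card S \<le> w"
  proof -
    have "card S \<le> card (B (tau V))" using SB finB by (intro card_mono) auto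
    then show ?thesis using Suc(5) tk by fastforce
  qed
  let ?X = "(N + 1) ^ w * (N * (2 * L) + N + 1)"
  have "length I1 \<le> length I" by (simp add: I1_def)
  then have lfs: "length I1 \<le> L" using Suc(12) by linarith
  have BB: "builds True gs (?X + ((card V - 1) * ?X + 2 * L)) (\<lambda>gs'. has gs' (SP N V ((SD, D) # I)))"
  proof (rule builds_seq)
    have "builds True gs ((N + 1) ^ w * (N * (2 * length I1) + N + 1)) (\<lambda>gs'. tab N gs' S (elimf N v ((SD, D) # I1)))"
      by (rule VBP_step[OF Suc(11) Suc(9) Suc(8) _ S_def finS cS]) (use Suc(10) in \<open>auto simp: I1_def\<close>)
    moreover have "(N + 1) ^ w * (N * (2 * length I1) + N + 1) \<le> ?X"
    proof (rule mult_le_mono2)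
      have "N * (2 * length I1) \<le> N * (2 * L)" using lfs by simp
      then show "N * (2 * length I1) + N + 1 \<le> N * (2 * L) + N + 1" by simp
    qed
    ultimately show "builds True gs ?X (\<lambda>gs'. tab N gs' S (elimf N v ((SD, D) # I1)))"
      by (rule builds_mono_cost)
  next
    fix gs1 assume e1: "ext gs gs1" "okc True gs1"
      and T1: "tab N gs1 S (elimf N v ((SD, D) # I1))"
    let ?D' = "elimf N v ((SD, D) # I1)"
    have split: "SP N V ((SD, D) # I) = SP N V (((SD, D) # I1) @ I2)"
      unfolding SP_def I1_def I2_def
      by (simp add: prod_list_filter_split[of _ I "\<lambda>f. v \<in> fst f"] mult.assoc)
    have eq: "SP N V ((SD, D) # I) = SP N (V - {v}) ((S, ?D') # I2)"
      unfolding split by (rule elim_SP[OF finV v(1)]) (use Suc(10) in \<open>auto simp: I2_def\<close>)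
    have cV: "card (V - {v}) = c" using Suc(2) v finV by simp
    have "builds True gs1 (card (V - {v}) * ?X + 2 * L) (\<lambda>gs'. has gs' (SP N (V - {v}) ((S, ?D') # I2)))"
    proof (rule Suc(1))
      show "c = card (V - {v})" using cV by simp
      show "finite (V - {v})" using finV by simp
      show "V - {v} \<subseteq> {0..<n}" using Suc(4) by auto
      show "\<forall>t<k. card (B t) \<le> w" by (rule Suc(5))
      show "S \<subseteq> V - {v}" by (rule SV)
      show "V - {v} \<noteq> {} \<longrightarrow> S \<subseteq> B (tau (V - {v}))"
      proof
        assume ne: "V - {v} \<noteq> {}"
        show "S \<subseteq> B (tau (V - {v}))"
        proof
          fix u assume u: "u \<in> S"
          have uV: "u \<in> V - {v}" using u SV by blast
          then have un: "u < n" using Suc(4) by auto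
          obtain v' where v': "v' \<in> V - {v}" "Lst v' = tau (V - {v})"
            using tau_props(1)[of "V - {v}"] finV ne by blast
          have "tau V \<le> tau (V - {v})" using tau_props(2)[OF finV Vne, of v'] v' by auto
          moreover have "tau (V - {v}) \<le> Lst u" using tau_props(2)[of "V - {v}" u] finV ne uV by auto
          moreover have "u \<in> B (tau V)" using SB u by auto
          ultimately show "u \<in> B (tau (V - {v}))"
            using interval[of "tau V" "tau (V - {v})" "Lst u" u] Lst_props[OF un] by auto
        qed
      qed
      show "localf S ?D'"
        using localf_elimf[of "(SD, D) # I1" v N] Suc(8) Suc(10)
        by (auto simp: S_def I1_def)
      show "tab N gs1 S ?D'" by (rule T1)
      show "\<forall>f\<in>set I2. fst f \<subseteq> V - {v} \<and> (\<exists>s<k. fst f \<subseteq> B s) \<and> localf (fst f) (snd f) \<and> leafyf (snd f)"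
      proof
        fix f assume "f \<in> set I2"
        then have f: "f \<in> set I" "v \<notin> fst f" by (auto simp: I2_def)
        then have "fst f \<subseteq> V" "(\<exists>s<k. fst f \<subseteq> B s) \<and> localf (fst f) (snd f) \<and> leafyf (snd f)"
          using Suc(10) by blast+
        then show "fst f \<subseteq> V - {v} \<and> (\<exists>s<k. fst f \<subseteq> B s) \<and> localf (fst f) (snd f) \<and> leafyf (snd f)"
          using f(2) by blast
      qed
      show "okc True gs1" by (rule e1(2))
      show "length I2 \<le> L" using Suc(12) by (simp add: I2_def) (meson le_trans length_filter_le)
    qed
    then show "builds True gs1 ((card V - 1) * ?X + 2 * L) (\<lambda>gs'. has gs' (SP N V ((SD, D) # I)))"
      using eq cV Suc(2)[symmetric] by simp
  qed
  have eq2: "?X + ((card V - 1) * ?X + 2 * L) = card V * ?X + 2 * L"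
    using Vne finV by (cases "card V") auto
  show ?case using BB unfolding eq2 .
qed

end


lemma pb_le_pow: "a * Suc m ^ a \<le> c * Suc m ^ c" if "a \<le> c" for a c m :: nat
  using that by (intro mult_le_mono power_increasing) auto

lemma pb_const: "poly_bounded (\<lambda>_. c)"
  unfolding poly_bounded_def by (intro exI[of _ c]) (auto intro: order.trans[OF _ mult_le_mono2[of 1]] simp: Suc_le_eq)

lemma pb_mono: "poly_bounded g \<Longrightarrow> (\<And>m. f m \<le> g m) \<Longrightarrow> poly_bounded f"
  unfolding poly_bounded_def using order.trans by blast

lemma pb_add:
  assumes "poly_bounded f" "poly_bounded g" shows "poly_bounded (\<lambda>m. f m + g m)"
proof -
  obtain a b where a: "\<forall>m. f m \<le> a * Suc m ^ a" and b: "\<forall>m. g m \<le> b * Suc m ^ b"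
    using assms unfolding poly_bounded_def by blast
  let ?c = "2 * (a + b)"
  have "\<forall>m. f m + g m \<le> ?c * Suc m ^ ?c"
  proof
    fix m
    have "f m \<le> (a + b) * Suc m ^ (a + b)"
      using a[rule_format, of m] pb_le_pow[of a "a + b" m] by linarith
    moreover have "g m \<le> (a + b) * Suc m ^ (a + b)"
      using b[rule_format, of m] pb_le_pow[of b "a + b" m] by linarith
    moreover have "(a + b) * Suc m ^ (a + b) + (a + b) * Suc m ^ (a + b) \<le> ?c * Suc m ^ ?c"
    proof -
      have "(a + b) * Suc m ^ (a + b) + (a + b) * Suc m ^ (a + b) = ?c * Suc m ^ (a + b)" by (simp only: mult_2 add_mult_distrib)
      also have "\<dots> \<le> ?c * Suc m ^ ?c" by (intro mult_le_mono power_increasing) auto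
      finally show ?thesis .
    qed
    ultimately show "f m + g m \<le> ?c * Suc m ^ ?c" by linarith
  qed
  then show ?thesis unfolding poly_bounded_def by blast
qed

lemma pb_mult:
  assumes "poly_bounded f" "poly_bounded g" shows "poly_bounded (\<lambda>m. f m * g m)"
proof -
  obtain a b where a: "\<forall>m. f m \<le> a * Suc m ^ a" and b: "\<forall>m. g m \<le> b * Suc m ^ b"
    using assms unfolding poly_bounded_def by blast
  let ?c = "a * b + a + b"
  have "\<forall>m. f m * g m \<le> ?c * Suc m ^ ?c"
  proof
    fix m
    have "f m * g m \<le> (a * Suc m ^ a) * (b * Suc m ^ b)" using a b by (intro mult_le_mono) auto
    also have "\<dots> = (a * b) * Suc m ^ (a + b)" by (simp add: power_add algebra_simps)
    also have "\<dots> \<le> ?c * Suc m ^ ?c"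
      by (intro mult_le_mono power_increasing) auto
    finally show "f m * g m \<le> ?c * Suc m ^ ?c" .
  qed
  then show ?thesis unfolding poly_bounded_def by blast
qed

lemma pb_pow:
  assumes "poly_bounded f" shows "poly_bounded (\<lambda>m. f m ^ j)"
proof (induction j)
  case 0 then show ?case using pb_const[of 1] by simp
next
  case (Suc j) then show ?case using pb_mult[OF assms Suc] by simp
qed

lemma zf_props:
  fixes zz :: "nat set \<times> ((nat \<Rightarrow> nat) \<Rightarrow> (hvar, 'a::comm_ring_1) mpoly)"
  assumes zz: "zz = zf u"
  shows "localf (fst zz) (snd zz)" "leafyf (snd zz)" "fst zz = {u}"
  unfolding zz by (auto simp: zf_def localf_def leafyf_def leafv_def)

lemma yf_props:
  fixes yy :: "nat set \<times> ((nat \<Rightarrow> nat) \<Rightarrow> (hvar, 'a::comm_ring_1) mpoly)"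
  assumes yy: "yy = yf N e"
  shows "localf (fst yy) (snd yy)" "leafyf (snd yy)" "fst yy = e"
proof -
  show "localf (fst yy) (snd yy)"
    unfolding localf_def
  proof (intro allI impI)
    fix \<phi> \<psi> :: "nat \<Rightarrow> nat" assume H: "\<forall>u\<in>fst yy. \<phi> u = \<psi> u"
    have "\<phi> ` e = \<psi> ` e" using H yy by (intro image_cong) (auto simp: yf_def)
    then show "snd yy \<phi> = snd yy \<psi>" using yy by (simp add: yf_def)
  qed
  show "leafyf (snd yy)" unfolding yy yf_def leafyf_def leafv_def
    by (auto simp flip: mconst_0)
  show "fst yy = e" by (simp add: yy yf_def)
qed


lemma init_tabs:
  fixes fs :: "(nat set \<times> ((nat \<Rightarrow> nat) \<Rightarrow> ('v, 'a::comm_ring_1) mpoly)) list"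
  assumes ok: "okc b gs" and fs: "\<forall>f\<in>set fs. leafyf (snd f) \<and> finite (fst f) \<and> card (fst f) \<le> 2"
  shows "builds b gs ((N + 1) ^ 2 * length fs) (\<lambda>gs'. \<forall>f\<in>set fs. tab N gs' (fst f) (snd f))"
proof -
  have "builds b gs ((N + 1) ^ 2 * card (set fs)) (\<lambda>gs'. True \<and> (\<forall>f\<in>set fs. tab N gs' (fst f) (snd f)))"
  proof (rule builds_iter)
    show "finite (set fs)" "okc b gs" "True" using ok by auto
    show "\<And>gs gs'. True \<Longrightarrow> ext gs gs' \<Longrightarrow> True" by simp
    show "\<And>x gs gs'. tab N gs (fst x) (snd x) \<Longrightarrow> ext gs gs' \<Longrightarrow> tab N gs' (fst x) (snd x)"
      using tab_ext by blast
  next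
    fix f and gs :: "('v, 'a) gate list" assume f: "f \<in> set fs" and ok1: "okc b gs"
    have fin: "finite (fst f)" "card (fst f) \<le> 2" using fs f by auto
    have "builds b gs (1 * card (asg N (fst f))) (\<lambda>gs'. True \<and> (\<forall>\<phi>\<in>asg N (fst f). has gs' (snd f \<phi>)))"
    proof (rule builds_iter)
      show "finite (asg N (fst f))" using finite_card_asg[OF fin(1)] by blast
      show "okc b gs" "True" using ok1 by auto
      show "\<And>gs gs'. True \<Longrightarrow> ext gs gs' \<Longrightarrow> True" by simp
      show "\<And>x gs gs'. has gs (snd f x) \<Longrightarrow> ext gs gs' \<Longrightarrow> has gs' (snd f x)"
        using has_ext by blast
    next
      fix \<phi> and gs :: "('v, 'a) gate list" assume "okc b gs"
      moreover have "leafv (snd f \<phi>)" using fs f by (auto simp: leafyf_def)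
      ultimately show "builds b gs 1 (\<lambda>gs'. has gs' (snd f \<phi>))" by (rule build_leaf)
    qed
    moreover have "1 * card (asg N (fst f)) \<le> (N + 1) ^ 2" using card_asg_le[OF fin] by simp
    ultimately have "builds b gs ((N + 1) ^ 2) (\<lambda>gs'. True \<and> (\<forall>\<phi>\<in>asg N (fst f). has gs' (snd f \<phi>)))"
      by (rule builds_mono_cost)
    then show "builds b gs ((N + 1) ^ 2) (\<lambda>gs'. tab N gs' (fst f) (snd f))"
      unfolding tab_def by (rule builds_mono) blast
  qed
  moreover have "(N + 1) ^ 2 * card (set fs) \<le> (N + 1) ^ 2 * length fs"
    by (intro mult_le_mono2 card_length)
  ultimately have "builds b gs ((N + 1) ^ 2 * length fs) (\<lambda>gs'. True \<and> (\<forall>f\<in>set fs. tab N gs' (fst f) (snd f)))"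
    by (rule builds_mono_cost)
  then show ?thesis by (rule builds_mono) blast
qed

lemma fs0_facts:
  assumes g: "wf_graph n EG" and es: "set es = EG"
  shows "\<forall>f\<in>set (fs0 N n es :: (nat set \<times> ((nat \<Rightarrow> nat) \<Rightarrow> (hvar, 'a::comm_ring_1) mpoly)) list).
     localf (fst f) (snd f) \<and> leafyf (snd f) \<and> fst f \<subseteq> {0..<n} \<and> finite (fst f) \<and> card (fst f) \<le> 2
     \<and> ((\<exists>u<n. fst f = {u}) \<or> fst f \<in> EG)"
proof
  fix f :: "nat set \<times> ((nat \<Rightarrow> nat) \<Rightarrow> (hvar, 'a::comm_ring_1) mpoly)"
  assume "f \<in> set (fs0 N n es)"
  then consider (z) u where "u < n" "f = zf u" | (y) e where "e \<in> EG" "f = yf N e"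
    unfolding fs0_def using es by auto
  then show "localf (fst f) (snd f) \<and> leafyf (snd f) \<and> fst f \<subseteq> {0..<n} \<and> finite (fst f) \<and> card (fst f) \<le> 2
     \<and> ((\<exists>u<n. fst f = {u}) \<or> fst f \<in> EG)"
  proof cases
    case z
    then show ?thesis using zf_props[OF z(2)] by auto
  next
    case y
    obtain a b where ab: "a \<noteq> b" "a < n" "b < n" "e = {a, b}" using g y(1) by (auto simp: wf_graph_def)
    then show ?thesis using yf_props[OF y(2)] y(1) by auto
  qed
qed

lemma length_fs0:
  assumes "distinct es" shows "length (fs0 N n es) = n + card (set es)"
  using assms by (simp add: fs0_def distinct_card)


lemma tree_dec_decT:
  assumes td: "tree_decomposition n EG k TE B" and es: "set es = EG" and g: "wf_graph n EG"
  shows "decT {0..<k} TE {0..<n} B (fst ` set (fs0 N n es :: (nat set \<times> ((nat \<Rightarrow> nat) \<Rightarrow> (hvar, 'a::comm_ring_1) mpoly)) list))"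
proof -
  have tr: "is_tree k TE" and bg: "\<forall>t<k. B t \<subseteq> {0..<n}" and cv: "\<forall>v<n. \<exists>t<k. v \<in> B t"
    and ed: "\<forall>e\<in>EG. \<exists>t<k. e \<subseteq> B t" and cn: "\<forall>v<n. connected_in TE {t. t < k \<and> v \<in> B t}"
    using td unfolding tree_decomposition_def by blast+
  have "treeT {0..<k} TE" using tr unfolding is_tree_def treeT_def wf_graph_def by auto
  moreover have "\<forall>S\<in>fst ` set (fs0 N n es :: (nat set \<times> ((nat \<Rightarrow> nat) \<Rightarrow> (hvar, 'a) mpoly)) list). \<exists>t\<in>{0..<k}. S \<subseteq> B t"
  proof
    fix S assume "S \<in> fst ` set (fs0 N n es :: (nat set \<times> ((nat \<Rightarrow> nat) \<Rightarrow> (hvar, 'a) mpoly)) list)"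
    then have "(\<exists>u<n. S = {u}) \<or> S \<in> EG" using fs0_facts[OF g es, where 'a='a] by auto
    then obtain t where "t < k" "S \<subseteq> B t"
    proof
      assume "\<exists>u<n. S = {u}"
      then obtain u where "u < n" "S = {u}" by blast
      then obtain t where "t < k" "u \<in> B t" using cv by blast
      then show ?thesis using that \<open>S = {u}\<close> by blast
    next
      assume "S \<in> EG"
      then show ?thesis using ed that by blast
    qed
    then show "\<exists>t\<in>{0..<k}. S \<subseteq> B t" by auto
  qed
  moreover have "\<forall>v\<in>{0..<n}. connected_in TE {t\<in>{0..<k}. v \<in> B t}" using cn by simp
  moreover have "\<forall>v\<in>{0..<n}. \<exists>t\<in>{0..<k}. v \<in> B t"
  proof
    fix v assume "v \<in> {0..<n}"
    then obtain t where "t < k" "v \<in> B t" using cv by auto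
    then show "\<exists>t\<in>{0..<k}. v \<in> B t" by auto
  qed
  moreover have "\<forall>t\<in>{0..<k}. B t \<subseteq> {0..<n}" using bg by simp
  ultimately show ?thesis unfolding decT_def by blast
qed

lemma VP_circuit:
  assumes g: "wf_graph n EG" and tw: "treewidth_le n EG w"
  shows "\<exists>gs. computes gs (hom_poly n EG N (complete_edges N) :: (hvar, 'a::comm_ring_1) mpoly) \<and>
    length gs \<le> (N + 1) ^ 2 * (n + n * n) + n * ((N + 1) ^ (w + 1) * (N * (n + n * n + n + 1) + N + 1)) + (n + n * n + n + 1) + 2"
proof -
  have finE: "finite EG" and cE: "card EG \<le> n * n" using wf_graph_fin[OF g] by auto
  obtain es where es: "set es = EG" "distinct es" using finite_distinct_list[OF finE] by blast
  define fs where "fs = (fs0 N n es :: (nat set \<times> ((nat \<Rightarrow> nat) \<Rightarrow> (hvar, 'a) mpoly)) list)"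
  define L0 where "L0 = length fs"
  have L0: "L0 = n + card EG" unfolding L0_def fs_def using length_fs0[OF es(2)] es(1) by simp
  then have L0le: "L0 \<le> n + n * n" using cE by simp
  obtain k TE B where td: "tree_decomposition n EG k TE B" and bc: "\<forall>t<k. card (B t) \<le> w + 1"
    using tw unfolding treewidth_le_def by blast
  have dec: "decT {0..<k} TE {0..<n} B (fst ` set fs)"
    unfolding fs_def by (rule tree_dec_decT[OF td es(1) g])
  have facts: "\<forall>f\<in>set fs. localf (fst f) (snd f) \<and> leafyf (snd f) \<and> fst f \<subseteq> {0..<n} \<and> finite (fst f) \<and> card (fst f) \<le> 2
     \<and> ((\<exists>u<n. fst f = {u}) \<or> fst f \<in> EG)" unfolding fs_def by (rule fs0_facts[OF g es(1)])
  let ?X = "(N + 1) ^ (w + 1) * (N * ((L0 + n) + 1) + N + 1)"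
  have "builds False [] ((N + 1) ^ 2 * L0 + (n * ?X + ((L0 + n) + 1)))
          (\<lambda>gs'. has gs' (SP N {0..<n} fs))"
  proof (rule builds_seq)
    show "builds False [] ((N + 1) ^ 2 * L0) (\<lambda>gs'. \<forall>f\<in>set fs. tab N gs' (fst f) (snd f))"
      unfolding L0_def by (rule init_tabs) (use facts in auto)
  next
    fix gs1 assume e: "ext [] gs1" "okc False gs1" "\<forall>f\<in>set fs. tab N gs1 (fst f) (snd f)"
    have "builds False gs1 (card {0..<n} * ?X + ((L0 + n) + 1)) (\<lambda>gs'. has gs' (SP N {0..<n} fs))"
    proof (rule VP_main[OF _ dec])
      show "finite {0..<n}" by simp
      show "\<forall>t\<in>{0..<k}. card (B t) \<le> w + 1" using bc by simp
      show "\<forall>f\<in>set fs. tab N gs1 (fst f) (snd f) \<and> localf (fst f) (snd f)" using e(3) facts by blast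
      show "okc False gs1" by (rule e(2))
      show "length fs + card {0..<n} \<le> L0 + n" by (simp add: L0_def)
    qed
    then show "builds False gs1 (n * ?X + ((L0 + n) + 1)) (\<lambda>gs'. has gs' (SP N {0..<n} fs))" by simp
  qed
  then obtain gs2 where gs2: "okc False gs2" "length gs2 \<le> (N + 1) ^ 2 * L0 + (n * ?X + ((L0 + n) + 1))"
    "has gs2 (SP N {0..<n} fs)" unfolding builds_def by auto
  obtain gs3 where gs3: "computes gs3 (SP N {0..<n} fs)" "length gs3 \<le> length gs2 + 2"
    using finish[OF gs2(1,3)] by blast
  have "SP N {0..<n} fs = (hom_poly n EG N (complete_edges N) :: (hvar, 'a) mpoly)"
    unfolding fs_def by (rule hom_poly_SP[OF g es, symmetric])
  moreover have "length gs3 \<le> (N + 1) ^ 2 * (n + n * n) + n * ((N + 1) ^ (w + 1) * (N * (n + n * n + n + 1) + N + 1)) + (n + n * n + n + 1) + 2"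
  proof -
    have "?X \<le> (N + 1) ^ (w + 1) * (N * (n + n * n + n + 1) + N + 1)"
      using L0le by (intro mult_le_mono2 add_le_mono mult_le_mono2) auto
    then have "n * ?X \<le> n * ((N + 1) ^ (w + 1) * (N * (n + n * n + n + 1) + N + 1))"
      by (rule mult_le_mono2)
    moreover have "(N + 1) ^ 2 * L0 \<le> (N + 1) ^ 2 * (n + n * n)" using L0le by (rule mult_le_mono2)
    ultimately show ?thesis using gs2(2) gs3(2) L0le by linarith
  qed
  ultimately show ?thesis using gs3 by metis
qed

lemma VBP_circuit:
  assumes g: "wf_graph n EG" and pw: "pathwidth_le n EG w"
  shows "\<exists>gs. computes gs (hom_poly n EG N (complete_edges N) :: (hvar, 'a::comm_ring_1) mpoly) \<and> skew_circuit gs \<and>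
    length gs \<le> 1 + n * ((N + 1) ^ (w + 1) * (N * (2 * (n + n * n)) + N + 1)) + 2 * (n + n * n) + 2"
proof -
  have finE: "finite EG" and cE: "card EG \<le> n * n" using wf_graph_fin[OF g] by auto
  obtain es where es: "set es = EG" "distinct es" using finite_distinct_list[OF finE] by blast
  define fs where "fs = (fs0 N n es :: (nat set \<times> ((nat \<Rightarrow> nat) \<Rightarrow> (hvar, 'a) mpoly)) list)"
  define L0 where "L0 = length fs"
  have L0: "L0 = n + card EG" unfolding L0_def fs_def using length_fs0[OF es(2)] es(1) by simp
  then have L0le: "L0 \<le> n + n * n" using cE by simp
  obtain k B where pd: "path_decomposition n EG k B" and bc: "\<forall>t<k. card (B t) \<le> w + 1"
    using pw unfolding pathwidth_le_def by blast
  have facts: "\<forall>f\<in>set fs. localf (fst f) (snd f) \<and> leafyf (snd f) \<and> fst f \<subseteq> {0..<n} \<and> finite (fst f) \<and> card (fst f) \<le> 2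
     \<and> ((\<exists>u<n. fst f = {u}) \<or> fst f \<in> EG)" unfolding fs_def by (rule fs0_facts[OF g es(1)])
  have cv: "\<forall>v<n. \<exists>t<k. v \<in> B t" and ed: "\<forall>e\<in>EG. \<exists>t<k. e \<subseteq> B t"
    using pd unfolding path_decomposition_def by blast+
  let ?gs0 = "[Cst 1] :: (hvar, 'a) gate list"
  have ok0: "okc True ?gs0" by (simp add: okc_def skew_circuit_def)
  have cv0: "circuit_vals ?gs0 = [1]" by (simp add: circuit_vals_def)
  have tab0: "tab N ?gs0 {} (\<lambda>_. 1)" by (simp add: tab_def has_def cv0)
  let ?X = "(N + 1) ^ (w + 1) * (N * (2 * L0) + N + 1)"
  have "builds True ?gs0 (card {0..<n} * ?X + 2 * L0) (\<lambda>gs'. has gs' (SP N {0..<n} (({}, \<lambda>_. 1) # fs)))"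
  proof (rule VBP_main[OF pd])
    show "finite {0..<n}" "{0..<n} \<subseteq> {0..<n}" "{} \<subseteq> {0..<n}" by auto
    show "\<forall>t<k. card (B t) \<le> w + 1" by (rule bc)
    show "{0..<n} \<noteq> {} \<longrightarrow> {} \<subseteq> B (tau k B {0..<n})" by simp
    show "localf {} (\<lambda>_. 1 :: (hvar, 'a) mpoly)" by (simp add: localf_def)
    show "tab N ?gs0 {} (\<lambda>_. 1)" by (rule tab0)
    show "okc True ?gs0" by (rule ok0)
    show "length fs \<le> L0" by (simp add: L0_def)
    show "\<forall>f\<in>set fs. fst f \<subseteq> {0..<n} \<and> (\<exists>s<k. fst f \<subseteq> B s) \<and> localf (fst f) (snd f) \<and> leafyf (snd f)"
    proof
      fix f assume f: "f \<in> set fs"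
      have "(\<exists>u<n. fst f = {u}) \<or> fst f \<in> EG" using facts f by blast
      then have "\<exists>s<k. fst f \<subseteq> B s" using cv ed by auto
      then show "fst f \<subseteq> {0..<n} \<and> (\<exists>s<k. fst f \<subseteq> B s) \<and> localf (fst f) (snd f) \<and> leafyf (snd f)"
        using facts f by blast
    qed
  qed
  then obtain gs2 where gs2: "okc True gs2" "length gs2 \<le> 1 + (n * ?X + 2 * L0)"
    "has gs2 (SP N {0..<n} (({}, \<lambda>_. 1) # fs))" unfolding builds_def by auto
  obtain gs3 where gs3: "computes gs3 (SP N {0..<n} (({}, \<lambda>_. 1) # fs))" "skew_circuit gs3" "length gs3 \<le> length gs2 + 2"
    using finish[OF gs2(1,3)] by blast
  have "SP N {0..<n} (({}, \<lambda>_. 1) # fs) = SP N {0..<n} fs" by (simp add: SP_def)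
  also have "SP N {0..<n} fs = (hom_poly n EG N (complete_edges N) :: (hvar, 'a) mpoly)"
    unfolding fs_def by (rule hom_poly_SP[OF g es, symmetric])
  finally have eqp: "SP N {0..<n} (({}, \<lambda>_. 1) # fs) = hom_poly n EG N (complete_edges N)" .
  moreover have "length gs3 \<le> 1 + n * ((N + 1) ^ (w + 1) * (N * (2 * (n + n * n)) + N + 1)) + 2 * (n + n * n) + 2"
  proof -
    have "?X \<le> (N + 1) ^ (w + 1) * (N * (2 * (n + n * n)) + N + 1)"
      using L0le by (intro mult_le_mono2 add_le_mono mult_le_mono2) auto
    then have "n * ?X \<le> n * ((N + 1) ^ (w + 1) * (N * (2 * (n + n * n)) + N + 1))"
      by (rule mult_le_mono2)
    moreover have "2 * L0 \<le> 2 * (n + n * n)" using L0le by simp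
    ultimately have "n * ?X + 2 * L0 \<le> n * ((N + 1) ^ (w + 1) * (N * (2 * (n + n * n)) + N + 1)) + 2 * (n + n * n)"
      by (rule add_mono)
    then show ?thesis using gs2(2) gs3(3) by linarith
  qed
  ultimately show ?thesis using gs3 by metis
qed


lemma vars_card:
  assumes g: "wf_graph n EG"
  shows "finite (mpoly_vars (hom_poly n EG N EH :: (hvar, 'a::field) mpoly))"
    "card (mpoly_vars (hom_poly n EG N EH :: (hvar, 'a::field) mpoly)) \<le> n * N + N * N"
proof -
  let ?A = "(\<lambda>(u, a). Zv u a) ` ({..<n} \<times> {..<N})" and ?B = "(\<lambda>(a, b). Yv {a, b}) ` ({..<N} \<times> {..<N})"
  have s: "mpoly_vars (hom_poly n EG N EH :: (hvar, 'a::field) mpoly) \<subseteq> ?A \<union> ?B"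
    by (rule hom_poly_vars_deg(1)[OF g])
  have f: "finite (?A \<union> ?B)" by auto
  show "finite (mpoly_vars (hom_poly n EG N EH :: (hvar, 'a::field) mpoly))" using finite_subset[OF s f] .
  have "card (mpoly_vars (hom_poly n EG N EH :: (hvar, 'a::field) mpoly)) \<le> card (?A \<union> ?B)"
    by (rule card_mono[OF f s])
  also have "\<dots> \<le> card ?A + card ?B" by (rule card_Un_le)
  also have "card ?A \<le> n * N" using card_image_le[of "{..<n} \<times> {..<N}" "\<lambda>(u, a). Zv u a"]
    by (simp add: card_cartesian_product)
  also have "card ?B \<le> N * N" using card_image_le[of "{..<N} \<times> {..<N}" "\<lambda>(a, b). Yv {a, b}"]
    by (simp add: card_cartesian_product)
  finally show "card (mpoly_vars (hom_poly n EG N EH :: (hvar, 'a::field) mpoly)) \<le> n * N + N * N" by simp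
qed

theorem theorem3:
  fixes nG nH :: "nat \<Rightarrow> nat" and EG :: "nat \<Rightarrow> nat set set"
  assumes graphs: "\<And>m. wf_graph (nG m) (EG m)"
    and pG: "poly_bounded nG"
    and pH: "poly_bounded nH"
  shows "((\<exists>w. \<forall>m. treewidth_le (nG m) (EG m) w) \<longrightarrow>
            in_VP (\<lambda>m. hom_poly (nG m) (EG m) (nH m) (complete_edges (nH m)) :: (hvar, 'a::field) mpoly))
       \<and> ((\<exists>w. \<forall>m. pathwidth_le (nG m) (EG m) w) \<longrightarrow>
            in_VBP (\<lambda>m. hom_poly (nG m) (EG m) (nH m) (complete_edges (nH m)) :: (hvar, 'a::field) mpoly))"
proof -
  let ?f = "\<lambda>m. hom_poly (nG m) (EG m) (nH m) (complete_edges (nH m)) :: (hvar, 'a::field) mpoly"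
  have pf: "p_family ?f"
    unfolding p_family_def
  proof (intro conjI allI)
    fix m show "finite (mpoly_vars (?f m))" by (rule vars_card(1)[OF graphs])
  next
    show "poly_bounded (\<lambda>m. card (mpoly_vars (?f m)))"
    proof (rule pb_mono)
      show "poly_bounded (\<lambda>m. nG m * nH m + nH m * nH m)" by (intro pb_add pb_mult pG pH)
      show "\<And>m. card (mpoly_vars (?f m)) \<le> nG m * nH m + nH m * nH m" by (rule vars_card(2)[OF graphs])
    qed
  next
    show "poly_bounded (\<lambda>m. mpoly_deg (?f m))"
    proof (rule pb_mono)
      show "poly_bounded (\<lambda>m. nG m + nG m * nG m)" by (intro pb_add pb_mult pG)
      show "\<And>m. mpoly_deg (?f m) \<le> nG m + nG m * nG m" by (rule hom_poly_vars_deg(2)[OF graphs])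
    qed
  qed
  show ?thesis
  proof (intro conjI impI)
    assume "\<exists>w. \<forall>m. treewidth_le (nG m) (EG m) w"
    then obtain w where tw: "\<forall>m. treewidth_le (nG m) (EG m) w" by blast
    let ?s = "\<lambda>m. (nH m + 1) ^ 2 * (nG m + nG m * nG m) + nG m * ((nH m + 1) ^ (w + 1) *
       (nH m * (nG m + nG m * nG m + nG m + 1) + nH m + 1)) + (nG m + nG m * nG m + nG m + 1) + 2"
    have "poly_bounded ?s" by (intro pb_add pb_mult pb_pow pb_const pG pH)
    moreover have "\<forall>m. \<exists>gs. computes gs (?f m) \<and> length gs \<le> ?s m"
      using VP_circuit[OF graphs tw[rule_format]] by blast
    ultimately show "in_VP ?f" unfolding in_VP_def using pf by blast
  next
    assume "\<exists>w. \<forall>m. pathwidth_le (nG m) (EG m) w"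
    then obtain w where pw: "\<forall>m. pathwidth_le (nG m) (EG m) w" by blast
    let ?s = "\<lambda>m. 1 + nG m * ((nH m + 1) ^ (w + 1) * (nH m * (2 * (nG m + nG m * nG m)) + nH m + 1))
       + 2 * (nG m + nG m * nG m) + 2"
    have "poly_bounded ?s" by (intro pb_add pb_mult pb_pow pb_const pG pH)
    moreover have "\<forall>m. \<exists>gs. computes gs (?f m) \<and> skew_circuit gs \<and> length gs \<le> ?s m"
      using VBP_circuit[OF graphs pw[rule_format]] by blast
    ultimately show "in_VBP ?f" unfolding in_VBP_def using pf by blast
  qed
qed


end
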